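(* Let $\Lambda_i\in\mathcal H_I$, $i\in[n]$, and let $\mathbb P$ be atomless. (i) If each $\phi_i:[0,\infty)\to\mathbb R$ is strictly convex with $\phi_i(1)=0$, $\lim_{x\to\infty}\phi_i(x)/x=\infty$, $\delta_i>0$, and $\Lambda_1^*$ is attainable, then $\mathop{\square}_{i=1}^n\sup_{\mathbb Q\in\mathcal P_{\phi_i}(\mathbb P,\delta_i)}\Lambda_i\mathrm{VaR}^{\mathbb Q}(X)=\Lambda_1^*\mathrm{VaR}^{\mathbb P}(X)$ for all $X\in\mathcal X$. (ii) If $0\le k_{i,1}<1<k_{i,2}$ and $\Lambda_2^*$ is attainable, then $\mathop{\square}_{i=1}^n\sup_{\mathbb Q\in\mathcal P(\mathbb P,k_{i,1},k_{i,2})}\Lambda_i\mathrm{VaR}^{\mathbb Q}(X)=\Lambda_2^*\mathrm{VaR}^{\mathbb P}(X)$ for all $X\in\mathcal X$.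
   Context: Notation as follows. $\Lambda\mathrm{VaR}^w(X)=\inf\{x:w(X>x)\le\Lambda(x)\}$; $\mathcal H_I$: increasing functions $\mathbb R\to(0,1)$. $\mathcal P_\phi(\mathbb P,\delta)=\{\mathbb Q\ll\mathbb P:\mathbb E^{\mathbb P}[\phi(\mathrm d\mathbb Q/\mathrm d\mathbb P)]\le\delta\}$; $g_{\phi,\delta}(x)=\sup\{t\in[x,1]:x\phi(t/x)+(1-x)\phi((1-t)/(1-x))\le\delta\}$ for $x\in(0,1)$, $g_{\phi,\delta}(0)=0,g_{\phi,\delta}(1)=1$, with inverse $g^{-1}_{\phi,\delta}$ on $(0,1)$. $\mathcal P(\mathbb P,k_1,k_2)=\{\mathbb Q\ll\mathbb P:k_1\le\mathrm d\mathbb Q/\mathrm d\mathbb P\le k_2\}$; $g_i(x)=(k_{i,2}x)\wedge(k_{i,1}x+1-k_{i,1})$ with inverse $g_i^{-1}$ on $(0,1)$. $\Lambda_1^*(x)=1\wedge\sup_{y_1+\dots+y_n=x}\sum_ig^{-1}_{\phi_i,\delta_i}(\Lambda_i(y_i))$ and $\Lambda_2^*(x)=1\wedge\sup_{y_1+\dots+y_n=x}\sum_ig_i^{-1}(\Lambda_i(y_i))$. A function of the form $\Lambda^*(x)=1\wedge\sup_{\sum y_i=x}\sum_i\tilde\Lambda_i(y_i)$ is attainable if for each $x$ there exist $(y_i)$ with $\sum_iy_i=x$ and $1\wedge\sum_i\tilde\Lambda_i(y_i)=\Lambda^*(x)$. Inf-convolution $\mathop{\square}_i\rho_i(X)=\inf\{\sum_i\rho_i(X_i):X_i\in\mathcal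 X,\sum_iX_i=X\}$, with $\mathcal X$ a set of real-valued random variables containing constants and closed under sums, differences, multiplication by indicators. *)

theory Defs
  imports "HOL-Probability.Probability"
begin

definition atomless :: "'a measure \<Rightarrow> bool" where
  "atomless M \<longleftrightarrow> (\<forall>A\<in>sets M. measure M A > 0 \<longrightarrow>
      (\<exists>B\<in>sets M. B \<subseteq> A \<and> 0 < measure M B \<and> measure M B < measure M A))"

definition H_I :: "(real \<Rightarrow> real) set" where
  "H_I = {L. mono L \<and> (\<forall>x. 0 < L x \<and> L x < 1)}"

text \<open>Lambda-VaR under the probability measure w:
  inf of x with w(X > x) <= Lambda(x), as an extended real (inf of empty set is +infinity).\<close>
definition LVaR :: "(real \<Rightarrow> real) \<Rightarrow> 'a measure \<Rightarrow> ('a \<Rightarrow> real) \<Rightarrow> ereal" where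
  "LVaR L w X = Inf (ereal ` {x. measure w {\<omega> \<in> space w. X \<omega> > x} \<le> L x})"

definition strictly_convex_nonneg :: "(real \<Rightarrow> real) \<Rightarrow> bool" where
  "strictly_convex_nonneg f \<longleftrightarrow> (\<forall>x\<ge>0. \<forall>y\<ge>0. \<forall>t. x \<noteq> y \<and> 0 < t \<and> t < 1 \<longrightarrow>
      f (t * x + (1 - t) * y) < t * f x + (1 - t) * f y)"

definition abs_cont_probs :: "'a measure \<Rightarrow> 'a measure set" where
  "abs_cont_probs P = {Q. prob_space Q \<and> sets Q = sets P \<and> absolutely_continuous P Q}"

definition phi_ball :: "'a measure \<Rightarrow> (real \<Rightarrow> real) \<Rightarrow> real \<Rightarrow> 'a measure set" where
  "phi_ball P \<phi> \<delta> = {Q \<in> abs_cont_probs P.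
      integrable P (\<lambda>\<omega>. \<phi> (enn2real (RN_deriv P Q \<omega>))) \<and>
      (\<integral>\<omega>. \<phi> (enn2real (RN_deriv P Q \<omega>)) \<partial>P) \<le> \<delta>}"

definition ratio_band :: "'a measure \<Rightarrow> real \<Rightarrow> real \<Rightarrow> 'a measure set" where
  "ratio_band P k1 k2 = {Q \<in> abs_cont_probs P.
      (AE \<omega> in P. ennreal k1 \<le> RN_deriv P Q \<omega> \<and> RN_deriv P Q \<omega> \<le> ennreal k2)}"

definition g_phi :: "(real \<Rightarrow> real) \<Rightarrow> real \<Rightarrow> real \<Rightarrow> real" where
  "g_phi \<phi> \<delta> x = (if x = 0 then 0 else if x = 1 then 1 else
      Sup {t. x \<le> t \<and> t \<le> 1 \<and> x * \<phi> (t / x) + (1 - x) * \<phi> ((1 - t) / (1 - x)) \<le> \<delta>})"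

definition g_band :: "real \<Rightarrow> real \<Rightarrow> real \<Rightarrow> real" where
  "g_band k1 k2 x = min (k2 * x) (k1 * x + 1 - k1)"

definition inv01 :: "(real \<Rightarrow> real) \<Rightarrow> real \<Rightarrow> real" where
  "inv01 g y = (THE x. 0 < x \<and> x < 1 \<and> g x = y)"

definition Lstar :: "nat \<Rightarrow> (nat \<Rightarrow> real \<Rightarrow> real) \<Rightarrow> real \<Rightarrow> real" where
  "Lstar n Lt x = min 1 (Sup {(\<Sum>i=1..n. Lt i (y i)) | y. (\<Sum>i=1..n. y i) = x})"

definition attainable :: "nat \<Rightarrow> (nat \<Rightarrow> real \<Rightarrow> real) \<Rightarrow> bool" where
  "attainable n Lt \<longleftrightarrow> (\<forall>x. \<exists>y. (\<Sum>i=1..n. y i) = x \<and>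
      min 1 (\<Sum>i=1..n. Lt i (y i)) = Lstar n Lt x)"

definition infconv :: "nat \<Rightarrow> (nat \<Rightarrow> ('a \<Rightarrow> real) \<Rightarrow> ereal) \<Rightarrow> 'a measure \<Rightarrow> ('a \<Rightarrow> real) set
    \<Rightarrow> ('a \<Rightarrow> real) \<Rightarrow> ereal" where
  "infconv n \<rho> M XX X = Inf {(\<Sum>i=1..n. \<rho> i (Y i)) | Y.
      (\<forall>i\<in>{1..n}. Y i \<in> XX) \<and> (\<forall>\<omega>\<in>space M. (\<Sum>i=1..n. Y i \<omega>) = X \<omega>)}"

definition admissible_rvs :: "'a measure \<Rightarrow> ('a \<Rightarrow> real) set \<Rightarrow> bool" where
  "admissible_rvs M XX \<longleftrightarrow> XX \<subseteq> borel_measurable M \<and>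
     (\<forall>c. (\<lambda>_. c) \<in> XX) \<and>
     (\<forall>X\<in>XX. \<forall>Y\<in>XX. (\<lambda>\<omega>. X \<omega> + Y \<omega>) \<in> XX \<and> (\<lambda>\<omega>. X \<omega> - Y \<omega>) \<in> XX) \<and>
     (\<forall>X\<in>XX. \<forall>A\<in>sets M. (\<lambda>\<omega>. indicator A \<omega> * X \<omega>) \<in> XX)"

end

theory Submission
  imports Defs
begin

lemma atomless_small:
  assumes P: "prob_space M" and al: "atomless M"
    and A: "A \<in> sets M" "measure M A > 0" and e: "e > 0"
  shows "\<exists>B\<in>sets M. B \<subseteq> A \<and> 0 < measure M B \<and> measure M B \<le> e"
proof -
  interpret prob_space M by fact
  have step: "\<exists>B\<in>sets M. B \<subseteq> A \<and> 0 < measure M B \<and> measure M B \<le> measure M A / 2^k" for k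
  proof (induction k)
    case 0 then show ?case using A by auto
  next
    case (Suc k)
    then obtain B where B: "B \<in> sets M" "B \<subseteq> A" "0 < measure M B" "measure M B \<le> measure M A / 2^k" by blast
    from al B obtain C where C: "C \<in> sets M" "C \<subseteq> B" "0 < measure M C" "measure M C < measure M B"
      unfolding atomless_def by blast
    have D: "measure M (B - C) = measure M B - measure M C"
      using C B by (simp add: finite_measure_Diff)
    show ?case
    proof (cases "measure M C \<le> measure M B / 2")
      case True
      have "measure M B / 2 \<le> measure M A / 2^k / 2" using B(4) by (rule divide_right_mono) simp
      moreover have "measure M A / 2^Suc k = measure M A / 2^k / 2" by simp
      ultimately have "measure M C \<le> measure M A / 2^Suc k" using True by linarith
      then show ?thesis using C B by (intro bexI[of _ C]) auto
    next
      case False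
      have "measure M B / 2 \<le> measure M A / 2^k / 2" using B(4) by (rule divide_right_mono) simp
      moreover have "measure M A / 2^Suc k = measure M A / 2^k / 2" by simp
      ultimately have "measure M (B - C) \<le> measure M A / 2^Suc k" using False D by linarith
      moreover have "0 < measure M (B - C)" using D C by linarith
      ultimately show ?thesis using C B by (intro bexI[of _ "B - C"]) auto
    qed
  qed
  have "measure M A \<le> 1" by simp
  obtain k where k: "(1/2::real) ^ k < e / measure M A"
    using real_arch_pow_inv[of "e / measure M A" "1/2"] A e by auto
  then have "measure M A * (1/2)^k < e" using A by (simp add: pos_less_divide_eq mult.commute)
  moreover have "measure M A * (1/2::real)^k = measure M A / 2^k" by (simp add: power_one_over)
  ultimately have lt: "measure M A / 2^k < e" by linarith
  obtain B where B: "B\<in>sets M" "B \<subseteq> A" "0 < measure M B" "measure M B \<le> measure M A / 2^k"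
    using step[of k] by blast
  show ?thesis using B lt by (intro bexI[of _ B]) auto
qed

lemma atomless_ivt:
  assumes P: "prob_space M" and al: "atomless M"
    and A: "A \<in> sets M" and c: "0 \<le> c" "c \<le> measure M A"
  shows "\<exists>B\<in>sets M. B \<subseteq> A \<and> measure M B = c"
proof -
  interpret prob_space M by fact
  define adm where "adm D C \<longleftrightarrow> C \<in> sets M \<and> C \<subseteq> A - D \<and> measure M D + measure M C \<le> c" for D C
  define s where "s D = Sup {measure M C | C. adm D C}" for D
  define ch where "ch D = (SOME C. adm D C \<and> s D / 2 \<le> measure M C)" for D
  define nxt where "nxt D = D \<union> ch D" for D
  define Ds where "Ds k = (nxt ^^ k) {}" for k
  have bdd: "bdd_above {measure M C | C. adm D C}" for D
    by (rule bdd_aboveI[of _ 1]) auto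
  have sup_ge: "adm D C \<Longrightarrow> measure M C \<le> s D" for D C
    unfolding s_def by (rule cSup_upper) (use bdd in auto)
  have good: "\<exists>C. adm D C \<and> s D / 2 \<le> measure M C"
    if D: "D \<in> sets M" "D \<subseteq> A" "measure M D \<le> c" for D
  proof -
    have a0: "adm D {}" using D by (auto simp: adm_def)
    have s0: "0 \<le> s D" using sup_ge[OF a0] by simp
    show ?thesis
    proof (cases "s D = 0")
      case True then show ?thesis using a0 by auto
    next
      case False
      then have "s D / 2 < Sup {measure M C | C. adm D C}" using s0 by (simp add: s_def)
      then obtain x where "x \<in> {measure M C | C. adm D C}" "s D / 2 < x"
        using less_cSup_iff[OF _ bdd] a0 by blast
      then show ?thesis by force
    qed
  qed
  have chp: "adm D (ch D) \<and> s D / 2 \<le> measure M (ch D)"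
    if "D \<in> sets M" "D \<subseteq> A" "measure M D \<le> c" for D
    unfolding ch_def by (rule someI_ex) (rule good[OF that])
  have inv: "Ds k \<in> sets M \<and> Ds k \<subseteq> A \<and> measure M (Ds k) \<le> c" for k
  proof (induction k)
    case 0 then show ?case using c by (simp add: Ds_def)
  next
    case (Suc k)
    have e: "Ds (Suc k) = Ds k \<union> ch (Ds k)" by (simp add: Ds_def nxt_def)
    from chp[of "Ds k"] Suc have h: "adm (Ds k) (ch (Ds k))" by blast
    then have "measure M (Ds k \<union> ch (Ds k)) = measure M (Ds k) + measure M (ch (Ds k))"
      using Suc by (intro finite_measure_Union) (auto simp: adm_def)
    then show ?case using h Suc e by (auto simp: adm_def)
  qed
  have incr: "measure M (Ds (Suc k)) = measure M (Ds k) + measure M (ch (Ds k))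
      \<and> s (Ds k) / 2 \<le> measure M (ch (Ds k))" for k
  proof -
    have e: "Ds (Suc k) = Ds k \<union> ch (Ds k)" by (simp add: Ds_def nxt_def)
    from chp[of "Ds k"] inv[of k] have h: "adm (Ds k) (ch (Ds k))" "s (Ds k) / 2 \<le> measure M (ch (Ds k))" by auto
    then have "measure M (Ds k \<union> ch (Ds k)) = measure M (Ds k) + measure M (ch (Ds k))"
      using inv[of k] by (intro finite_measure_Union) (auto simp: adm_def)
    then show ?thesis using e h by simp
  qed
  have inc: "incseq Ds"
    by (rule incseq_SucI) (simp add: Ds_def nxt_def)
  define B where "B = (\<Union>k. Ds k)"
  have Bs: "B \<in> sets M" using inv by (auto simp: B_def)
  have BA: "B \<subseteq> A" using inv by (auto simp: B_def)
  have lim: "(\<lambda>k. measure M (Ds k)) \<longlonglongrightarrow> measure M B"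
    unfolding B_def by (rule finite_Lim_measure_incseq) (use inv inc in auto)
  have Bc: "measure M B \<le> c"
    by (rule LIMSEQ_le_const2[OF lim]) (use inv in auto)
  have DB: "measure M (Ds k) \<le> measure M B" for k
    using inv[of k] Bs by (intro finite_measure_mono) (auto simp: B_def)
  show ?thesis
  proof (rule ccontr)
    assume "\<not> ?thesis"
    then have lt: "measure M B < c" using Bc Bs BA by force
    have "measure M (A - B) = measure M A - measure M B"
      using A Bs BA by (simp add: finite_measure_Diff)
    then have pos: "measure M (A - B) > 0" using lt c by simp
    obtain E where E: "E \<in> sets M" "E \<subseteq> A - B" "0 < measure M E" "measure M E \<le> c - measure M B"
      using atomless_small[OF P al _ pos, of "c - measure M B"] A Bs lt by auto
    have admE: "adm (Ds k) E" for k
      using E DB[of k] by (auto simp: adm_def B_def)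
    have grow: "real k * (measure M E / 2) \<le> measure M (Ds k)" for k
    proof (induction k)
      case 0 then show ?case by simp
    next
      case (Suc k)
      have "measure M E \<le> s (Ds k)" using sup_ge[OF admE] .
      moreover have "real (Suc k) * (measure M E / 2) = real k * (measure M E / 2) + measure M E / 2"
        by (simp add: algebra_simps)
      ultimately show ?case using incr[of k] Suc by linarith
    qed
    obtain k where k: "2 / measure M E < real k" using reals_Archimedean2 by blast
    then have "2 < real k * measure M E" using E by (simp add: divide_less_eq)
    moreover have "real k * (measure M E / 2) = (real k * measure M E) / 2" by simp
    ultimately have "1 < real k * (measure M E / 2)" by linarith
    with grow[of k] have "1 < measure M (Ds k)" by simp
    then show False using prob_le_1[of "Ds k"] by simp
  qed
qed

lemma atomless_split:
  fixes n :: nat and a :: "nat \<Rightarrow> real"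
  assumes P: "prob_space M" and al: "atomless M"
  shows "n \<ge> 1 \<Longrightarrow> A \<in> sets M \<Longrightarrow> (\<forall>i\<in>{1..n}. 0 \<le> a i) \<Longrightarrow> measure M A \<le> (\<Sum>i=1..n. a i) \<Longrightarrow>
    \<exists>B. (\<forall>i\<in>{1..n}. B i \<in> sets M \<and> B i \<subseteq> A \<and> measure M (B i) \<le> a i) \<and>
        (\<forall>i\<in>{1..n}. \<forall>j\<in>{1..n}. i \<noteq> j \<longrightarrow> B i \<inter> B j = {}) \<and> (\<Union>i\<in>{1..n}. B i) = A"
proof (induction n arbitrary: A)
  case 0 then show ?case by simp
next
  case (Suc n)
  interpret prob_space M by fact
  show ?case
  proof (cases "n = 0")
    case True
    then show ?thesis using Suc.prems by (intro exI[of _ "\<lambda>_. A"]) auto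
  next
    case False
    define m where "m = min (a (Suc n)) (measure M A)"
    have m0: "0 \<le> m" using Suc.prems by (auto simp: m_def)
    obtain C where C: "C \<in> sets M" "C \<subseteq> A" "measure M C = m"
      using atomless_ivt[OF P al \<open>A \<in> sets M\<close> m0] by (auto simp: m_def)
    have mAC: "measure M (A - C) = measure M A - m"
      using C Suc.prems by (simp add: finite_measure_Diff)
    have sum: "(\<Sum>i=1..Suc n. a i) = (\<Sum>i=1..n. a i) + a (Suc n)" by simp
    have nn: "0 \<le> (\<Sum>i=1..n. a i)" using Suc.prems by (intro sum_nonneg) auto
    have "measure M (A - C) \<le> (\<Sum>i=1..n. a i)"
      using mAC Suc.prems(4) sum nn unfolding m_def by linarith
    then obtain B where B: "\<forall>i\<in>{1..n}. B i \<in> sets M \<and> B i \<subseteq> A - C \<and> measure M (B i) \<le> a i"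
      "\<forall>i\<in>{1..n}. \<forall>j\<in>{1..n}. i \<noteq> j \<longrightarrow> B i \<inter> B j = {}" "(\<Union>i\<in>{1..n}. B i) = A - C"
      using Suc.IH[of "A - C"] False Suc.prems C by auto
    define B' where "B' = B(Suc n := C)"
    have "measure M C \<le> a (Suc n)" using C by (simp add: m_def)
    moreover have "{1..Suc n} = insert (Suc n) {1..n}" by auto
    moreover have "(\<Union>i\<in>{1..Suc n}. B' i) = (\<Union>i\<in>{1..n}. B i) \<union> C"
      unfolding \<open>{1..Suc n} = insert (Suc n) {1..n}\<close> by (auto simp: B'_def)
    moreover have "(\<Union>i\<in>{1..n}. B i) \<union> C = A" using B(3) C by auto
    ultimately show ?thesis using B C
      by (intro exI[of _ B']) (auto simp: B'_def)
  qed
qed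

lemma LVaR_props:
  assumes P: "prob_space M" and Y: "Y \<in> borel_measurable M"
    and mo: "mono L" and L01: "\<forall>x. 0 < L x \<and> L x < 1"
  shows "\<exists>r. LVaR L M Y = ereal r \<and>
    (\<forall>x>r. measure M {\<omega>\<in>space M. Y \<omega> > x} \<le> L x) \<and>
    (\<forall>x<r. measure M {\<omega>\<in>space M. Y \<omega> > x} > L x)"
proof -
  interpret prob_space M by fact
  define F where "F x = measure M {\<omega>\<in>space M. Y \<omega> > x}" for x
  define S where "S = {x. F x \<le> L x}"
  have meas: "{\<omega>\<in>space M. Y \<omega> > x} \<in> sets M" for x using Y by measurable
  have Fanti: "x \<le> y \<Longrightarrow> F y \<le> F x" for x y
    unfolding F_def by (rule finite_measure_mono) (use meas in auto)
  have up: "x \<in> S \<Longrightarrow> x \<le> y \<Longrightarrow> y \<in> S" for x y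
    using Fanti[of x y] mo[THEN monoD, of x y] by (auto simp: S_def)
  have lim0: "(\<lambda>k. F (real k)) \<longlonglongrightarrow> measure M (\<Inter>k. {\<omega>\<in>space M. Y \<omega> > real k})"
    unfolding F_def by (rule finite_Lim_measure_decseq) (use meas in \<open>auto simp: decseq_def\<close>)
  have "(\<Inter>k. {\<omega>\<in>space M. Y \<omega> > real k}) = {}"
  proof -
    { fix \<omega> assume "\<forall>k. Y \<omega> > real k"
      then have False using reals_Archimedean2[of "Y \<omega>"] by (meson less_asym) }
    then show ?thesis by auto
  qed
  then have lim0': "(\<lambda>k. F (real k)) \<longlonglongrightarrow> 0" using lim0 by simp
  have "\<forall>\<^sub>F k in sequentially. F (real k) < L 0" using L01
    by (intro order_tendstoD(2)[OF lim0']) auto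
  then obtain k where k: "F (real k) < L 0" by (meson eventually_sequentially order.refl)
  have "L 0 \<le> L (real k)" using mo by (simp add: monoD)
  then have kS: "real k \<in> S" using k by (simp add: S_def)
  have lim1: "(\<lambda>k. F (- real k)) \<longlonglongrightarrow> measure M (\<Union>k. {\<omega>\<in>space M. Y \<omega> > - real k})"
    unfolding F_def by (rule finite_Lim_measure_incseq) (use meas in \<open>auto simp: incseq_def\<close>)
  have "(\<Union>k. {\<omega>\<in>space M. Y \<omega> > - real k}) = space M"
  proof -
    { fix \<omega> assume "\<omega> \<in> space M"
      obtain j where "- Y \<omega> < real j" using reals_Archimedean2 by blast
      then have "\<exists>j. Y \<omega> > - real j" by (intro exI[of _ j]) simp }
    then show ?thesis by auto
  qed
  then have lim1': "(\<lambda>k. F (- real k)) \<longlonglongrightarrow> 1" using lim1 by (simp add: prob_space)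
  have "\<forall>\<^sub>F k in sequentially. L 0 < F (- real k)" using L01
    by (intro order_tendstoD(1)[OF lim1']) auto
  then obtain j where j: "L 0 < F (- real j)" by (meson eventually_sequentially order.refl)
  have lb: "x \<in> S \<Longrightarrow> - real j < x" for x
  proof (rule ccontr)
    assume "x \<in> S" "\<not> - real j < x"
    then have "F (- real j) \<le> F x" "L x \<le> L 0" using Fanti mo[THEN monoD, of x 0] by auto
    then show False using \<open>x\<in>S\<close> j by (auto simp: S_def)
  qed
  have bdd: "bdd_below S" using lb by (meson bdd_belowI less_imp_le)
  have ne: "S \<noteq> {}" using kS by auto
  define r where "r = Inf S"
  have "LVaR L M Y = Inf (ereal ` S)" by (simp add: LVaR_def S_def F_def)
  also have "\<dots> = ereal r" unfolding r_def using ereal_Inf'[OF bdd ne] by simp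
  finally have e: "LVaR L M Y = ereal r" .
  have gt: "x > r \<Longrightarrow> x \<in> S" for x
  proof -
    assume "x > r"
    then obtain s where "s \<in> S" "s < x" using cInf_less_iff[OF ne bdd] by (auto simp: r_def)
    then show "x \<in> S" using up by auto
  qed
  have lt: "x < r \<Longrightarrow> x \<notin> S" for x
    using cInf_lower[OF _ bdd] by (force simp: r_def)
  show ?thesis using e gt lt by (intro exI[of _ r]) (auto simp: S_def F_def not_le)
qed

lemma sup_LVaR:
  fixes g :: "real \<Rightarrow> real" and Qs :: "'a measure set"
  assumes P: "prob_space M" and Y: "Y \<in> borel_measurable M"
    and Qs: "\<forall>Q\<in>Qs. prob_space Q \<and> sets Q = sets M"
    and moL: "mono L" and L01: "\<forall>x. 0 < L x \<and> L x < 1"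
    and moL': "mono L'" and L'01: "\<forall>x. 0 < L' x \<and> L' x < 1"
    and upb: "\<forall>Q\<in>Qs. \<forall>A\<in>sets M. measure Q A \<le> g (measure M A)"
    and lob: "\<forall>A\<in>sets M. \<forall>c. c < g (measure M A) \<longrightarrow> (\<exists>Q\<in>Qs. c < measure Q A)"
    and eqv: "\<forall>x p. 0 \<le> p \<and> p \<le> 1 \<longrightarrow> (g p \<le> L x \<longleftrightarrow> p \<le> L' x)"
  shows "(SUP Q\<in>Qs. LVaR L Q Y) = LVaR L' M Y"
proof -
  interpret prob_space M by fact
  have meas: "{\<omega>\<in>space M. Y \<omega> > x} \<in> sets M" for x using Y by measurable
  obtain r where r: "LVaR L' M Y = ereal r"
    "\<forall>x>r. measure M {\<omega>\<in>space M. Y \<omega> > x} \<le> L' x"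
    "\<forall>x<r. measure M {\<omega>\<in>space M. Y \<omega> > x} > L' x"
    using LVaR_props[OF P Y moL' L'01] by blast
  have Qprops: "\<exists>rQ. LVaR L Q Y = ereal rQ \<and>
      (\<forall>x>rQ. measure Q {\<omega>\<in>space M. Y \<omega> > x} \<le> L x) \<and>
      (\<forall>x<rQ. measure Q {\<omega>\<in>space M. Y \<omega> > x} > L x)" if Q: "Q \<in> Qs" for Q
  proof -
    have PQ: "prob_space Q" and sQ: "sets Q = sets M" using Qs Q by auto
    have spQ: "space Q = space M" using sets_eq_imp_space_eq[OF sQ] .
    have YQ: "Y \<in> borel_measurable Q" by (subst measurable_cong_sets[OF sQ refl]) (rule Y)
    show ?thesis using LVaR_props[OF PQ YQ moL L01] spQ by simp
  qed
  have le: "LVaR L Q Y \<le> ereal r" if Q: "Q \<in> Qs" for Q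
  proof -
    obtain rQ where rQ: "LVaR L Q Y = ereal rQ"
      "\<forall>x<rQ. measure Q {\<omega>\<in>space M. Y \<omega> > x} > L x" using Qprops[OF Q] by blast
    show ?thesis
    proof (rule ccontr)
      assume "\<not> ?thesis"
      then have "r < rQ" using rQ by simp
      define x where "x = (r + rQ) / 2"
      have x: "r < x" "x < rQ" using \<open>r < rQ\<close> by (auto simp: x_def)
      let ?A = "{\<omega>\<in>space M. Y \<omega> > x}"
      have p01: "0 \<le> measure M ?A \<and> measure M ?A \<le> 1" by simp
      have "measure M ?A \<le> L' x" using r(2) x by auto
      then have "g (measure M ?A) \<le> L x" using eqv[rule_format, OF p01, of x] by blast
      moreover have "measure Q ?A \<le> g (measure M ?A)" using upb Q meas by blast
      moreover have "measure Q ?A > L x" using rQ x by auto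
      ultimately show False by linarith
    qed
  qed
  have ge: "ereal b \<le> (SUP Q\<in>Qs. LVaR L Q Y)" if b: "b < r" for b
  proof -
    let ?A = "{\<omega>\<in>space M. Y \<omega> > b}"
    have p01: "0 \<le> measure M ?A \<and> measure M ?A \<le> 1" by simp
    have "measure M ?A > L' b" using r(3) b by auto
    moreover have e: "g (measure M ?A) \<le> L b \<longleftrightarrow> measure M ?A \<le> L' b" by (rule eqv[rule_format, OF p01])
    ultimately have "L b < g (measure M ?A)" by (meson not_le)
    from lob[rule_format, OF meas[of b] this] obtain Q where Q: "Q \<in> Qs" "L b < measure Q ?A" by blast
    obtain rQ where rQ: "LVaR L Q Y = ereal rQ"
      "\<forall>x>rQ. measure Q {\<omega>\<in>space M. Y \<omega> > x} \<le> L x" using Qprops[OF Q(1)] by blast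
    have "b \<le> rQ"
    proof (rule ccontr)
      assume "\<not> b \<le> rQ"
      define x where "x = (b + rQ) / 2"
      have x: "rQ < x" "x < b" using \<open>\<not> b \<le> rQ\<close> by (auto simp: x_def)
      have PQ: "prob_space Q" and sQ: "sets Q = sets M" using Qs Q by auto
      interpret Q: prob_space Q by fact
      have "measure Q ?A \<le> measure Q {\<omega>\<in>space M. Y \<omega> > x}"
        using meas sQ x by (intro Q.finite_measure_mono) auto
      moreover have "measure Q {\<omega>\<in>space M. Y \<omega> > x} \<le> L x" using rQ x by auto
      moreover have "L x \<le> L b" using moL x by (simp add: monoD)
      ultimately show False using Q by linarith
    qed
    then have "ereal b \<le> LVaR L Q Y" using rQ by simp
    also have "\<dots> \<le> (SUP Q\<in>Qs. LVaR L Q Y)" using Q by (intro SUP_upper) auto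
    finally show ?thesis .
  qed
  have "(SUP Q\<in>Qs. LVaR L Q Y) \<le> ereal r" using le by (intro SUP_least) auto
  moreover have "ereal r \<le> (SUP Q\<in>Qs. LVaR L Q Y)"
  proof (rule dense_le)
    fix y assume "y < ereal r"
    show "y \<le> (SUP Q\<in>Qs. LVaR L Q Y)"
    proof (cases y)
      case (real b) then show ?thesis using ge \<open>y < ereal r\<close> by auto
    next
      case PInf then show ?thesis using \<open>y < ereal r\<close> by auto
    next
      case MInf then show ?thesis by simp
    qed
  qed
  ultimately show ?thesis using r(1) by simp
qed

lemma infconv_core:
  fixes \<Lambda> :: "nat \<Rightarrow> real \<Rightarrow> real" and \<rho> :: "nat \<Rightarrow> ('a \<Rightarrow> real) \<Rightarrow> ereal"
  assumes P: "prob_space M" and al: "atomless M" and adm: "admissible_rvs M XX" and n: "n \<ge> 1"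
    and Lm: "\<forall>i\<in>{1..n}. mono (\<Lambda> i) \<and> (\<forall>x. 0 < \<Lambda> i x \<and> \<Lambda> i x < 1)"
    and att: "attainable n \<Lambda>"
    and req: "\<forall>i\<in>{1..n}. \<forall>Y\<in>XX. \<rho> i Y = LVaR (\<Lambda> i) M Y"
    and X: "X \<in> XX"
  shows "infconv n \<rho> M XX X = LVaR (Lstar n \<Lambda>) M X"
proof -
  interpret prob_space M by fact
  have XXm: "XX \<subseteq> borel_measurable M" using adm by (simp add: admissible_rvs_def)
  have Xm: "X \<in> borel_measurable M" using X XXm by auto
  have measgt: "f \<in> borel_measurable M \<Longrightarrow> {\<omega>\<in>space M. f \<omega> > c} \<in> sets M" for f :: "'a \<Rightarrow> real" and c :: real by measurable
  define S where "S = {x. measure M {\<omega>\<in>space M. X \<omega> > x} \<le> Lstar n \<Lambda> x}"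
  have V: "LVaR (Lstar n \<Lambda>) M X = Inf (ereal ` S)" by (simp add: LVaR_def S_def)
  have bddL: "bdd_above {(\<Sum>i=1..n. \<Lambda> i (y i)) | y. (\<Sum>i=1..n. y i) = x}" for x
  proof (rule bdd_aboveI[of _ "real n"])
    fix s assume "s \<in> {(\<Sum>i=1..n. \<Lambda> i (y i)) | y. (\<Sum>i=1..n. y i) = x}"
    then obtain y where "s = (\<Sum>i=1..n. \<Lambda> i (y i))" by blast
    also have "\<dots> \<le> (\<Sum>i=1..n. (1::real))" using Lm by (intro sum_mono) (auto simp: less_imp_le)
    finally show "s \<le> real n" by simp
  qed
  have Lstar_ge: "min 1 (\<Sum>i=1..n. \<Lambda> i (y i)) \<le> Lstar n \<Lambda> x" if "(\<Sum>i=1..n. y i) = x" for y x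
  proof -
    have "(\<Sum>i=1..n. \<Lambda> i (y i)) \<le> Sup {(\<Sum>i=1..n. \<Lambda> i (y i)) | y. (\<Sum>i=1..n. y i) = x}"
      by (rule cSup_upper) (use that bddL in auto)
    then show ?thesis by (auto simp: Lstar_def min_def)
  qed
  have lower: "LVaR (Lstar n \<Lambda>) M X \<le> (\<Sum>i=1..n. \<rho> i (Y i))"
    if Y: "\<forall>i\<in>{1..n}. Y i \<in> XX" "\<forall>\<omega>\<in>space M. (\<Sum>i=1..n. Y i \<omega>) = X \<omega>" for Y
  proof -
    have Ym: "Y i \<in> borel_measurable M" if "i \<in> {1..n}" for i using Y that XXm by auto
    have "\<forall>i\<in>{1..n}. \<exists>r. LVaR (\<Lambda> i) M (Y i) = ereal r \<and> (\<forall>x>r. measure M {\<omega>\<in>space M. Y i \<omega> > x} \<le> \<Lambda> i x)"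
    proof
      fix i assume i: "i \<in> {1..n}"
      show "\<exists>r. LVaR (\<Lambda> i) M (Y i) = ereal r \<and> (\<forall>x>r. measure M {\<omega>\<in>space M. Y i \<omega> > x} \<le> \<Lambda> i x)"
        using LVaR_props[OF P Ym[OF i], of "\<Lambda> i"] Lm i by blast
    qed
    from bchoice[OF this] obtain r where r: "\<forall>i\<in>{1..n}. LVaR (\<Lambda> i) M (Y i) = ereal (r i) \<and> (\<forall>x>r i. measure M {\<omega>\<in>space M. Y i \<omega> > x} \<le> \<Lambda> i x)"
      by blast
    have sumeq: "(\<Sum>i=1..n. \<rho> i (Y i)) = ereal (\<Sum>i=1..n. r i)"
    proof -
      have "(\<Sum>i=1..n. \<rho> i (Y i)) = (\<Sum>i=1..n. ereal (r i))" using r req Y by (intro sum.cong) auto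
      then show ?thesis by simp
    qed
    have key: "LVaR (Lstar n \<Lambda>) M X \<le> ereal z" if z: "z > (\<Sum>i=1..n. r i)" for z
    proof -
      define e where "e = (z - (\<Sum>i=1..n. r i)) / real n"
      have e0: "e > 0" using z n by (simp add: e_def)
      define x where "x i = r i + e" for i
      have "(\<Sum>i=1..n. x i) = (\<Sum>i=1..n. r i) + real n * e" by (simp add: x_def sum.distrib)
      also have "real n * e = z - (\<Sum>i=1..n. r i)" using n by (simp add: e_def)
      finally have sx: "(\<Sum>i=1..n. x i) = z" by simp
      have sub: "{\<omega>\<in>space M. X \<omega> > z} \<subseteq> (\<Union>i\<in>{1..n}. {\<omega>\<in>space M. Y i \<omega> > x i})"
      proof
        fix \<omega> assume w: "\<omega> \<in> {\<omega>\<in>space M. X \<omega> > z}"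
        show "\<omega> \<in> (\<Union>i\<in>{1..n}. {\<omega>\<in>space M. Y i \<omega> > x i})"
        proof (rule ccontr)
          assume "\<not> ?thesis"
          then have "\<forall>i\<in>{1..n}. Y i \<omega> \<le> x i" using w by auto
          then have "(\<Sum>i=1..n. Y i \<omega>) \<le> (\<Sum>i=1..n. x i)" by (intro sum_mono) auto
          then show False using w Y(2) sx by auto
        qed
      qed
      have "measure M {\<omega>\<in>space M. X \<omega> > z} \<le> measure M (\<Union>i\<in>{1..n}. {\<omega>\<in>space M. Y i \<omega> > x i})"
        using sub Ym measgt by (intro finite_measure_mono) auto
      also have "\<dots> \<le> (\<Sum>i=1..n. measure M {\<omega>\<in>space M. Y i \<omega> > x i})"
        using Ym measgt by (intro finite_measure_subadditive_finite) auto
      also have "\<dots> \<le> (\<Sum>i=1..n. \<Lambda> i (x i))"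
        using r e0 by (intro sum_mono) (auto simp: x_def)
      finally have m1: "measure M {\<omega>\<in>space M. X \<omega> > z} \<le> (\<Sum>i=1..n. \<Lambda> i (x i))" .
      have "measure M {\<omega>\<in>space M. X \<omega> > z} \<le> min 1 (\<Sum>i=1..n. \<Lambda> i (x i))" using m1 by simp
      also have "\<dots> \<le> Lstar n \<Lambda> z" using Lstar_ge sx by blast
      finally have "z \<in> S" by (simp add: S_def)
      then show ?thesis unfolding V by (intro Inf_lower) auto
    qed
    have "LVaR (Lstar n \<Lambda>) M X \<le> ereal (\<Sum>i=1..n. r i)"
    proof (rule dense_ge)
      fix y assume y: "ereal (\<Sum>i=1..n. r i) < y"
      show "LVaR (Lstar n \<Lambda>) M X \<le> y"
      proof (cases y)
        case (real z) then show ?thesis using key y by auto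
      qed (use y in auto)
    qed
    then show ?thesis using sumeq by simp
  qed
  have upper: "infconv n \<rho> M XX X \<le> ereal s" if s: "s \<in> S" for s
  proof -
    obtain y where y: "(\<Sum>i=1..n. y i) = s" "min 1 (\<Sum>i=1..n. \<Lambda> i (y i)) = Lstar n \<Lambda> s"
      using att by (auto simp: attainable_def)
    define A where "A = {\<omega>\<in>space M. X \<omega> > s}"
    have As: "A \<in> sets M" unfolding A_def using Xm by measurable
    have "measure M A \<le> Lstar n \<Lambda> s" using s by (simp add: S_def A_def)
    then have "measure M A \<le> (\<Sum>i=1..n. \<Lambda> i (y i))" using y(2) by linarith
    then obtain B where B: "\<forall>i\<in>{1..n}. B i \<in> sets M \<and> B i \<subseteq> A \<and> measure M (B i) \<le> \<Lambda> i (y i)"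
        "\<forall>i\<in>{1..n}. \<forall>j\<in>{1..n}. i \<noteq> j \<longrightarrow> B i \<inter> B j = {}" "(\<Union>i\<in>{1..n}. B i) = A"
      using atomless_split[OF P al n As, of "\<lambda>i. \<Lambda> i (y i)"] Lm by (auto simp: less_imp_le)
    define C where "C i = (if i = 1 then B 1 \<union> (space M - A) else B i)" for i
    define Y where "Y i = (\<lambda>\<omega>. y i + indicator (C i) \<omega> * (X \<omega> - s))" for i
    have Cs: "C i \<in> sets M" if "i\<in>{1..n}" for i using B that As n by (auto simp: C_def)
    have YX: "Y i \<in> XX" if "i\<in>{1..n}" for i
    proof -
      have c1: "(\<lambda>_. y i) \<in> XX" "(\<lambda>_. s) \<in> XX" using adm by (auto simp: admissible_rvs_def)
      have "(\<lambda>\<omega>. X \<omega> - s) \<in> XX" using adm X c1 by (auto simp: admissible_rvs_def)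
      then have "(\<lambda>\<omega>. indicator (C i) \<omega> * (X \<omega> - s)) \<in> XX"
        using adm Cs[OF that] by (auto simp: admissible_rvs_def)
      then show ?thesis using adm c1 by (auto simp: admissible_rvs_def Y_def)
    qed
    have disj: "disjoint_family_on C {1..n}"
      unfolding disjoint_family_on_def
    proof (intro ballI impI)
      fix i j assume ij: "i \<in> {1..n}" "j \<in> {1..n}" "i \<noteq> j"
      have bij: "B i \<inter> B j = {}" using B(2) ij by blast
      have "B i \<subseteq> A" "B j \<subseteq> A" using B(1) ij by auto
      then show "C i \<inter> C j = {}" using bij ij by (auto simp: C_def)
    qed
    have cover: "(\<Union>i\<in>{1..n}. C i) = space M"
    proof -
      have "(\<Union>i\<in>{1..n}. C i) = (\<Union>i\<in>{1..n}. B i) \<union> (space M - A)"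
        using n by (auto simp: C_def)
      also have "\<dots> = space M" using B(3) As sets.sets_into_space by auto
      finally show ?thesis .
    qed
    have ind1: "(\<Sum>i=1..n. indicator (C i) \<omega>) = (1::real)" if "\<omega> \<in> space M" for \<omega>
      using indicator_UN_disjoint[OF _ disj, of \<omega>, symmetric] cover that by auto
    have sumY: "\<forall>\<omega>\<in>space M. (\<Sum>i=1..n. Y i \<omega>) = X \<omega>"
    proof
      fix \<omega> assume w: "\<omega> \<in> space M"
      have "(\<Sum>i=1..n. Y i \<omega>) = (\<Sum>i=1..n. y i) + (\<Sum>i=1..n. indicator (C i) \<omega>) * (X \<omega> - s)"
        by (simp add: Y_def sum.distrib sum_distrib_right)
      also have "\<dots> = X \<omega>" using ind1[OF w] y(1) by simp
      finally show "(\<Sum>i=1..n. Y i \<omega>) = X \<omega>" .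
    qed
    have rle: "\<rho> i (Y i) \<le> ereal (y i)" if i: "i \<in> {1..n}" for i
    proof -
      have "{\<omega>\<in>space M. Y i \<omega> > y i} \<subseteq> B i"
      proof
        fix \<omega> assume "\<omega> \<in> {\<omega>\<in>space M. Y i \<omega> > y i}"
        then have w: "\<omega> \<in> space M" "indicator (C i) \<omega> * (X \<omega> - s) > 0" by (auto simp: Y_def)
        then have "\<omega> \<in> C i" "X \<omega> > s" by (cases "\<omega> \<in> C i"; simp)+
        then show "\<omega> \<in> B i" using w by (auto simp: C_def A_def split: if_splits)
      qed
      then have "measure M {\<omega>\<in>space M. Y i \<omega> > y i} \<le> measure M (B i)"
        using B(1) i by (intro finite_measure_mono) auto
      then have "measure M {\<omega>\<in>space M. Y i \<omega> > y i} \<le> \<Lambda> i (y i)"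
        using B(1) i by fastforce
      then have "y i \<in> {x. measure M {\<omega>\<in>space M. Y i \<omega> > x} \<le> \<Lambda> i x}" by simp
      then have "LVaR (\<Lambda> i) M (Y i) \<le> ereal (y i)" unfolding LVaR_def by (intro Inf_lower) auto
      then show ?thesis using req YX[OF i] i by simp
    qed
    have "infconv n \<rho> M XX X \<le> (\<Sum>i=1..n. \<rho> i (Y i))"
      unfolding infconv_def using YX sumY by (intro Inf_lower) blast
    also have "\<dots> \<le> (\<Sum>i=1..n. ereal (y i))" using rle by (intro sum_mono) auto
    also have "\<dots> = ereal s" using y(1) by simp
    finally show ?thesis .
  qed
  have "infconv n \<rho> M XX X \<le> LVaR (Lstar n \<Lambda>) M X"
  proof (rule dense_ge)
    fix w assume w: "LVaR (Lstar n \<Lambda>) M X < w"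
    then obtain s where s: "s \<in> S" "ereal s < w" unfolding V by (auto simp: Inf_less_iff)
    then show "infconv n \<rho> M XX X \<le> w" using upper[OF s(1)] by (meson less_imp_le order_trans)
  qed
  moreover have "LVaR (Lstar n \<Lambda>) M X \<le> infconv n \<rho> M XX X"
    unfolding infconv_def
  proof (rule Inf_greatest)
    fix v assume "v \<in> {(\<Sum>i=1..n. \<rho> i (Y i)) | Y. (\<forall>i\<in>{1..n}. Y i \<in> XX) \<and> (\<forall>\<omega>\<in>space M. (\<Sum>i=1..n. Y i \<omega>) = X \<omega>)}"
    then obtain Y where "v = (\<Sum>i=1..n. \<rho> i (Y i))" "\<forall>i\<in>{1..n}. Y i \<in> XX" "\<forall>\<omega>\<in>space M. (\<Sum>i=1..n. Y i \<omega>) = X \<omega>"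
      by blast
    then show "LVaR (Lstar n \<Lambda>) M X \<le> v" using lower by simp
  qed
  ultimately show ?thesis by (rule antisym)
qed

lemma sc_convex:
  assumes "strictly_convex_nonneg f"
  shows "convex_on {0..} f"
proof (rule convex_onI)
  fix t x y :: real
  assume t: "0 < t" "t < 1" and xy: "x \<in> {0..}" "y \<in> {0..}"
  show "f ((1 - t) *\<^sub>R x + t *\<^sub>R y) \<le> (1 - t) * f x + t * f y"
  proof (cases "x = y")
    case True
    have "(1 - t) * x + t * x = x" by (simp add: algebra_simps)
    then show ?thesis using True by (simp add: algebra_simps)
  next
    case False
    have "f ((1 - t) * x + (1 - (1 - t)) * y) < (1 - t) * f x + (1 - (1 - t)) * f y"
      using assms[unfolded strictly_convex_nonneg_def, rule_format, of x y "1 - t"] False t xy by auto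
    then show ?thesis by simp
  qed
qed (simp add: convex_real_interval)

lemma supp_line:
  assumes "convex_on {0..} f" "m > (0::real)"
  shows "\<exists>s. \<forall>z\<ge>0. f z \<ge> f m + s * (z - m)"
proof -
  have "m \<in> interior {0..}" using assms by simp
  then show ?thesis using convex_le_Inf_differential[OF assms(1)] by auto
qed

lemma density_two:
  fixes M :: "'a measure"
  assumes P: "prob_space M" and A: "A \<in> sets M" and p: "0 < measure M A" "measure M A < 1"
    and t: "0 \<le> t" "t \<le> 1"
  defines "f \<equiv> \<lambda>\<omega>. if \<omega> \<in> A then t / measure M A else (1 - t) / (1 - measure M A)"
  shows "density M (\<lambda>\<omega>. ennreal (f \<omega>)) \<in> abs_cont_probs M"
    and "measure (density M (\<lambda>\<omega>. ennreal (f \<omega>))) A = t"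
    and "AE \<omega> in M. RN_deriv M (density M (\<lambda>\<omega>. ennreal (f \<omega>))) \<omega> = ennreal (f \<omega>)"
    and "f \<in> borel_measurable M" and "\<forall>\<omega>. 0 \<le> f \<omega>"
proof -
  interpret prob_space M by fact
  define p where "p = measure M A"
  define Q where "Q = density M (\<lambda>\<omega>. ennreal (f \<omega>))"
  have fm: "f \<in> borel_measurable M" unfolding f_def using A by measurable
  show "f \<in> borel_measurable M" by (rule fm)
  show f0: "\<forall>\<omega>. 0 \<le> f \<omega>" using p t by (auto simp: f_def)
  have emA: "emeasure M A = ennreal p" using A by (simp add: p_def emeasure_eq_measure)
  have emC: "emeasure M (space M - A) = ennreal (1 - p)"
    using A by (simp add: p_def emeasure_eq_measure prob_compl)
  have emQ: "emeasure Q B = ennreal (t / p) * emeasure M (A \<inter> B) + ennreal ((1 - t) / (1 - p)) * emeasure M ((space M - A) \<inter> B)"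
    if B: "B \<in> sets M" for B
  proof -
    have "emeasure Q B = (\<integral>\<^sup>+ \<omega>. ennreal (f \<omega>) * indicator B \<omega> \<partial>M)"
      unfolding Q_def using fm B by (intro emeasure_density) auto
    also have "\<dots> = (\<integral>\<^sup>+ \<omega>. ennreal (t / p) * indicator (A \<inter> B) \<omega> + ennreal ((1 - t) / (1 - p)) * indicator ((space M - A) \<inter> B) \<omega> \<partial>M)"
      by (intro nn_integral_cong) (auto simp: f_def p_def indicator_def)
    also have "\<dots> = (\<integral>\<^sup>+ \<omega>. ennreal (t / p) * indicator (A \<inter> B) \<omega> \<partial>M) + (\<integral>\<^sup>+ \<omega>. ennreal ((1 - t) / (1 - p)) * indicator ((space M - A) \<inter> B) \<omega> \<partial>M)"
      using A B by (intro nn_integral_add) auto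
    also have "\<dots> = ennreal (t / p) * emeasure M (A \<inter> B) + ennreal ((1 - t) / (1 - p)) * emeasure M ((space M - A) \<inter> B)"
      using A B by (simp add: nn_integral_cmult_indicator)
    finally show ?thesis .
  qed
  have spQ: "space Q = space M" by (simp add: Q_def)
  have "emeasure Q (space M) = ennreal (t / p) * ennreal p + ennreal ((1 - t) / (1 - p)) * ennreal (1 - p)"
    using emQ[of "space M"] emA emC A sets.sets_into_space[OF A] by (simp add: Int_absorb2)
  also have "\<dots> = ennreal (t / p * p + (1 - t) / (1 - p) * (1 - p))"
    using p t by (simp add: ennreal_mult'[symmetric] ennreal_plus[symmetric] p_def del: ennreal_plus)
  also have "t / p * p + (1 - t) / (1 - p) * (1 - p) = 1" using p by (simp add: p_def)
  finally have tot: "emeasure Q (space Q) = 1" using spQ by simp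
  have PQ: "prob_space Q" by (rule prob_spaceI) (rule tot)
  have sQ: "sets Q = sets M" by (simp add: Q_def)
  have ac: "absolutely_continuous M Q" unfolding Q_def using fm by (intro absolutely_continuousI_density) auto
  show "Q \<in> abs_cont_probs M" using PQ sQ ac by (simp add: abs_cont_probs_def)
  have "emeasure Q A = ennreal (t / p) * ennreal p"
    using emQ[OF A] emA A by (simp add: Diff_Int_distrib2)
  also have "\<dots> = ennreal t" using p t by (simp add: ennreal_mult'[symmetric] p_def)
  finally show "measure Q A = t" using t by (simp add: measure_def)
  have sf: "sigma_finite_measure M" by (rule prob_space_imp_sigma_finite) fact
  show "AE \<omega> in M. RN_deriv M Q \<omega> = ennreal (f \<omega>)"
    using sigma_finite_measure.RN_deriv_unique[OF sf, of "\<lambda>\<omega>. ennreal (f \<omega>)" Q] fm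
    unfolding Q_def by (auto elim: AE_mp)
qed

lemma RN_facts:
  fixes M :: "'a measure"
  assumes P: "prob_space M" and Q: "Q \<in> abs_cont_probs M"
  shows "(\<lambda>\<omega>. enn2real (RN_deriv M Q \<omega>)) \<in> borel_measurable M"
    and "\<forall>\<omega>. 0 \<le> enn2real (RN_deriv M Q \<omega>)"
    and "B \<in> sets M \<Longrightarrow> integrable M (\<lambda>\<omega>. enn2real (RN_deriv M Q \<omega>) * indicator B \<omega>)"
    and "B \<in> sets M \<Longrightarrow> measure Q B = (\<integral>\<omega>. enn2real (RN_deriv M Q \<omega>) * indicator B \<omega> \<partial>M)"
proof -
  have PQ: "prob_space Q" and sQ: "sets Q = sets M" and ac: "absolutely_continuous M Q"
    using Q by (auto simp: abs_cont_probs_def)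
  have sf: "sigma_finite_measure M" by (rule prob_space_imp_sigma_finite) fact
  have sfQ: "sigma_finite_measure Q" by (rule prob_space_imp_sigma_finite) fact
  show "(\<lambda>\<omega>. enn2real (RN_deriv M Q \<omega>)) \<in> borel_measurable M" by measurable
  show "\<forall>\<omega>. 0 \<le> enn2real (RN_deriv M Q \<omega>)" by simp
  assume B: "B \<in> sets M"
  have BQ: "B \<in> sets Q" using B sQ by simp
  interpret PQ: prob_space Q by fact
  have iQ: "integrable Q (indicator B :: 'a \<Rightarrow> real)"
    using BQ PQ.emeasure_finite[of B] by (intro integrable_real_indicator) (auto simp: less_top[symmetric])
  have im: "(indicator B :: 'a \<Rightarrow> real) \<in> borel_measurable M" using B by measurable
  show "integrable M (\<lambda>\<omega>. enn2real (RN_deriv M Q \<omega>) * indicator B \<omega>)"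
    using sigma_finite_measure.RN_deriv_integrable[OF sf sfQ ac sQ im] iQ by simp
  have "integral\<^sup>L Q (indicator B) = (\<integral>\<omega>. enn2real (RN_deriv M Q \<omega>) * indicator B \<omega> \<partial>M)"
    using sigma_finite_measure.RN_deriv_integral[OF sf sfQ ac sQ im] .
  moreover have "integral\<^sup>L Q (indicator B :: 'a \<Rightarrow> real) = measure Q B"
    using sets.sets_into_space[OF BQ] by (simp add: Int_absorb2)
  ultimately show "measure Q B = (\<integral>\<omega>. enn2real (RN_deriv M Q \<omega>) * indicator B \<omega> \<partial>M)" by simp
qed

lemma jensen_piece:
  fixes M :: "'a measure" and \<phi> :: "real \<Rightarrow> real"
  assumes P: "prob_space M" and cv: "convex_on {0..} \<phi>" and Zm: "Z \<in> borel_measurable M"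
    and Z0: "\<forall>\<omega>. 0 \<le> Z \<omega>" and B: "B \<in> sets M" and q: "measure M B > 0"
    and iZ: "integrable M (\<lambda>\<omega>. Z \<omega> * indicator B \<omega>)"
    and i\<phi>: "integrable M (\<lambda>\<omega>. \<phi> (Z \<omega>))"
  shows "measure M B * \<phi> ((\<integral>\<omega>. Z \<omega> * indicator B \<omega> \<partial>M) / measure M B)
          \<le> (\<integral>\<omega>. \<phi> (Z \<omega>) * indicator B \<omega> \<partial>M)"
proof -
  interpret prob_space M by fact
  define a where "a = (\<integral>\<omega>. Z \<omega> * indicator B \<omega> \<partial>M)"
  define q where "q = measure M B"
  have a0: "0 \<le> a" unfolding a_def using Z0 by (intro integral_nonneg_AE) (auto simp: indicator_def)
  have iB: "integrable M (indicator B :: 'a \<Rightarrow> real)" using B emeasure_finite[of B] by (intro integrable_real_indicator) (auto simp: less_top[symmetric])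
  have iPB: "integrable M (\<lambda>\<omega>. \<phi> (Z \<omega>) * indicator B \<omega>)"
    using B i\<phi> by (rule integrable_real_mult_indicator)
  have intB: "(\<integral>\<omega>. indicator B \<omega> \<partial>M) = q" using B by (simp add: q_def Int_absorb2 sets.sets_into_space)
  show ?thesis
  proof (cases "a = 0")
    case False
    then have m0: "a / q > 0" using a0 q by (simp add: q_def)
    obtain s where s: "\<forall>z\<ge>0. \<phi> z \<ge> \<phi> (a / q) + s * (z - a / q)" using supp_line[OF cv m0] by blast
    define c where "c = \<phi> (a/q) - s * (a/q)"
    have i1: "integrable M (\<lambda>\<omega>. c * indicator B \<omega>)" using iB by (rule integrable_mult_right)
    have i2: "integrable M (\<lambda>\<omega>. s * (Z \<omega> * indicator B \<omega>))" using iZ by (rule integrable_mult_right)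
    have pw: "c * indicator B \<omega> + s * (Z \<omega> * indicator B \<omega>) \<le> \<phi> (Z \<omega>) * indicator B \<omega>" for \<omega>
    proof (cases "\<omega> \<in> B")
      case True
      have z0: "0 \<le> Z \<omega>" using Z0 by blast
      have h1: "\<phi> (a/q) + s * (Z \<omega> - a/q) \<le> \<phi> (Z \<omega>)" using s[rule_format, OF z0] .
      have h2: "s * (Z \<omega> - a/q) = s * Z \<omega> - s * (a/q)" by (rule right_diff_distrib)
      have ind: "indicator B \<omega> = (1::real)" using True by simp
      have "c + s * Z \<omega> \<le> \<phi> (Z \<omega>)" using h1 h2 unfolding c_def by linarith
      then show ?thesis unfolding ind mult_1_right .
    next
      case False then show ?thesis by simp
    qed
    have "(\<integral>\<omega>. c * indicator B \<omega> + s * (Z \<omega> * indicator B \<omega>) \<partial>M)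
          \<le> (\<integral>\<omega>. \<phi> (Z \<omega>) * indicator B \<omega> \<partial>M)"
      using i1 i2 iPB pw by (intro integral_mono) auto
    moreover have "(\<integral>\<omega>. c * indicator B \<omega> + s * (Z \<omega> * indicator B \<omega>) \<partial>M)
        = (\<integral>\<omega>. c * indicator B \<omega> \<partial>M) + (\<integral>\<omega>. s * (Z \<omega> * indicator B \<omega>) \<partial>M)"
      by (rule Bochner_Integration.integral_add[OF i1 i2])
    moreover have "(\<integral>\<omega>. c * indicator B \<omega> \<partial>M) = c * q" using intB by simp
    moreover have "(\<integral>\<omega>. s * (Z \<omega> * indicator B \<omega>) \<partial>M) = s * a" by (simp add: a_def)
    moreover have "c * q + s * a = q * \<phi> (a / q)"
    proof -
      have cq: "c * q = \<phi> (a/q) * q - s * (a/q) * q" by (simp add: c_def left_diff_distrib)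
      have "s * (a/q) * q = s * a" using q by (simp add: q_def)
      moreover have "\<phi> (a/q) * q = q * \<phi> (a / q)" by (rule mult.commute)
      ultimately show ?thesis using cq by linarith
    qed
    ultimately have "q * \<phi> (a / q) \<le> (\<integral>\<omega>. \<phi> (Z \<omega>) * indicator B \<omega> \<partial>M)" by linarith
    then show ?thesis by (simp only: a_def q_def)
  next
    case True
    have "AE \<omega> in M. Z \<omega> * indicator B \<omega> = 0"
      using integral_nonneg_eq_0_iff_AE[OF iZ] True Z0 by (simp add: a_def)
    then have "AE \<omega> in M. \<phi> (Z \<omega>) * indicator B \<omega> = \<phi> 0 * indicator B \<omega>"
      by eventually_elim (auto simp: indicator_def)
    then have "(\<integral>\<omega>. \<phi> (Z \<omega>) * indicator B \<omega> \<partial>M) = (\<integral>\<omega>. \<phi> 0 * indicator B \<omega> \<partial>M)"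
      using borel_measurable_integrable[OF iPB] B by (intro integral_cong_AE) auto
    also have "\<dots> = \<phi> 0 * q" using intB by simp
    finally have e: "(\<integral>\<omega>. \<phi> (Z \<omega>) * indicator B \<omega> \<partial>M) = \<phi> 0 * q" .
    have z: "(\<integral>\<omega>. Z \<omega> * indicator B \<omega> \<partial>M) / measure M B = 0" using True by (simp only: a_def)
    have l: "measure M B * \<phi> ((\<integral>\<omega>. Z \<omega> * indicator B \<omega> \<partial>M) / measure M B) = measure M B * \<phi> 0"
      by (simp only: z)
    have r: "\<phi> 0 * q = measure M B * \<phi> 0" by (metis mult.commute q_def)
    show ?thesis using l r e by linarith
  qed
qed

lemma phi_upper:
  fixes M :: "'a measure"
  assumes P: "prob_space M" and cv: "convex_on {0..} \<phi>" and Q: "Q \<in> phi_ball M \<phi> \<delta>"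
    and A: "A \<in> sets M" and p: "0 < measure M A" "measure M A < 1"
  shows "measure M A * \<phi> (measure Q A / measure M A)
     + (1 - measure M A) * \<phi> ((1 - measure Q A) / (1 - measure M A)) \<le> \<delta>"
proof -
  interpret prob_space M by fact
  have Qa: "Q \<in> abs_cont_probs M" and i\<phi>: "integrable M (\<lambda>\<omega>. \<phi> (enn2real (RN_deriv M Q \<omega>)))"
    and le: "(\<integral>\<omega>. \<phi> (enn2real (RN_deriv M Q \<omega>)) \<partial>M) \<le> \<delta>"
    using Q by (auto simp: phi_ball_def)
  define Z where "Z \<omega> = enn2real (RN_deriv M Q \<omega>)" for \<omega>
  have PQ: "prob_space Q" and sQ: "sets Q = sets M" using Qa by (auto simp: abs_cont_probs_def)
  have spQ: "space Q = space M" using sets_eq_imp_space_eq[OF sQ] .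
  note F = RN_facts[OF P Qa, folded Z_def]
  define C where "C = space M - A"
  have Cs: "C \<in> sets M" using A by (simp add: C_def)
  have mC: "measure M C = 1 - measure M A" using A by (simp add: C_def prob_compl)
  have QC: "measure Q C = 1 - measure Q A"
    using prob_space.prob_compl[OF PQ, of A] A sQ spQ by (simp add: C_def)
  have j1: "measure M A * \<phi> (measure Q A / measure M A) \<le> (\<integral>\<omega>. \<phi> (Z \<omega>) * indicator A \<omega> \<partial>M)"
    using jensen_piece[OF P cv F(1) F(2) A p(1) F(3)[OF A]] i\<phi> F(4)[OF A] by (simp add: Z_def)
  have j2: "measure M C * \<phi> (measure Q C / measure M C) \<le> (\<integral>\<omega>. \<phi> (Z \<omega>) * indicator C \<omega> \<partial>M)"
    using jensen_piece[OF P cv F(1) F(2) Cs _ F(3)[OF Cs]] i\<phi> F(4)[OF Cs] mC p by (simp add: Z_def)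
  have i\<phi>Z: "integrable M (\<lambda>\<omega>. \<phi> (Z \<omega>))" using i\<phi> by (simp add: Z_def)
  have "(\<integral>\<omega>. \<phi> (Z \<omega>) \<partial>M) = (\<integral>\<omega>. \<phi> (Z \<omega>) * indicator A \<omega> + \<phi> (Z \<omega>) * indicator C \<omega> \<partial>M)"
    by (rule Bochner_Integration.integral_cong[OF refl]) (auto simp: C_def indicator_def)
  also have "\<dots> = (\<integral>\<omega>. \<phi> (Z \<omega>) * indicator A \<omega> \<partial>M) + (\<integral>\<omega>. \<phi> (Z \<omega>) * indicator C \<omega> \<partial>M)"
    using i\<phi>Z A Cs by (intro Bochner_Integration.integral_add integrable_real_mult_indicator)
  finally show ?thesis using j1 j2 le mC QC by (simp add: Z_def)
qed

lemma band_upper: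
  fixes M :: "'a measure"
  assumes P: "prob_space M" and Q: "Q \<in> ratio_band M k1 k2" and k1: "0 \<le> k1" and k2: "0 \<le> k2"
    and A: "A \<in> sets M"
  shows "measure Q A \<le> k2 * measure M A" and "measure Q A \<le> 1 - k1 * (1 - measure M A)"
proof -
  interpret prob_space M by fact
  have Qa: "Q \<in> abs_cont_probs M"
    and ae: "AE \<omega> in M. ennreal k1 \<le> RN_deriv M Q \<omega> \<and> RN_deriv M Q \<omega> \<le> ennreal k2"
    using Q by (auto simp: ratio_band_def)
  define Z where "Z \<omega> = enn2real (RN_deriv M Q \<omega>)" for \<omega>
  have PQ: "prob_space Q" and sQ: "sets Q = sets M" using Qa by (auto simp: abs_cont_probs_def)
  have spQ: "space Q = space M" using sets_eq_imp_space_eq[OF sQ] .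
  note F = RN_facts[OF P Qa, folded Z_def]
  have pt: "k1 \<le> Z \<omega> \<and> Z \<omega> \<le> k2"
    if h: "ennreal k1 \<le> RN_deriv M Q \<omega> \<and> RN_deriv M Q \<omega> \<le> ennreal k2" for \<omega>
  proof -
    have t2: "ennreal k2 < top" by simp
    have fin: "RN_deriv M Q \<omega> < top" using h t2 by (meson le_less_trans)
    have "enn2real (ennreal k1) \<le> enn2real (RN_deriv M Q \<omega>)" using h fin by (intro enn2real_mono) auto
    moreover have "enn2real (RN_deriv M Q \<omega>) \<le> enn2real (ennreal k2)" using h t2 by (intro enn2real_mono) auto
    ultimately show ?thesis using k1 k2 by (simp add: Z_def)
  qed
  have aeZ: "AE \<omega> in M. k1 \<le> Z \<omega> \<and> Z \<omega> \<le> k2"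
    using ae by eventually_elim (rule pt)
  have iA: "integrable M (\<lambda>\<omega>. k2 * indicator A \<omega>)"
    using A emeasure_finite[of A] by (intro integrable_mult_right integrable_real_indicator) (auto simp: less_top[symmetric])
  have ae1: "AE \<omega> in M. Z \<omega> * indicator A \<omega> \<le> k2 * indicator A \<omega>"
    using aeZ by eventually_elim (simp add: indicator_def)
  have "measure Q A = (\<integral>\<omega>. Z \<omega> * indicator A \<omega> \<partial>M)" using F(4)[OF A] .
  also have "\<dots> \<le> (\<integral>\<omega>. k2 * indicator A \<omega> \<partial>M)"
    by (rule integral_mono_AE[OF F(3)[OF A] iA ae1])
  also have "\<dots> = k2 * measure M A" using A by (simp add: Int_absorb2 sets.sets_into_space)
  finally show "measure Q A \<le> k2 * measure M A" .
  define C where "C = space M - A"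
  have Cs: "C \<in> sets M" using A by (simp add: C_def)
  have mC: "measure M C = 1 - measure M A" using A by (simp add: C_def prob_compl)
  have QC: "measure Q C = 1 - measure Q A"
    using prob_space.prob_compl[OF PQ, of A] A sQ spQ by (simp add: C_def)
  have iC: "integrable M (\<lambda>\<omega>. k1 * indicator C \<omega>)"
    using Cs emeasure_finite[of C] by (intro integrable_mult_right integrable_real_indicator) (auto simp: less_top[symmetric])
  have ae2: "AE \<omega> in M. k1 * indicator C \<omega> \<le> Z \<omega> * indicator C \<omega>"
    using aeZ by eventually_elim (simp add: indicator_def)
  have "k1 * measure M C = (\<integral>\<omega>. k1 * indicator C \<omega> \<partial>M)" using Cs by (simp add: Int_absorb2 sets.sets_into_space)
  also have "\<dots> \<le> (\<integral>\<omega>. Z \<omega> * indicator C \<omega> \<partial>M)"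
    by (rule integral_mono_AE[OF iC F(3)[OF Cs] ae2])
  also have "\<dots> = measure Q C" using F(4)[OF Cs] by simp
  finally have "k1 * measure M C \<le> measure Q C" .
  then show "measure Q A \<le> 1 - k1 * (1 - measure M A)" using mC QC by simp
qed

definition Hf :: "(real \<Rightarrow> real) \<Rightarrow> real \<Rightarrow> real \<Rightarrow> real" where
  "Hf \<phi> x t = x * \<phi> (t / x) + (1 - x) * \<phi> ((1 - t) / (1 - x))"

lemma persp:
  fixes \<phi> :: "real \<Rightarrow> real"
  assumes cv: "convex_on {0..} \<phi>" and y: "y \<ge> 0" and a: "a \<ge> 0" and b: "b \<ge> 0"
    and pos: "y > 0 \<longrightarrow> a > 0 \<and> b > 0" and l: "0 \<le> l" "l \<le> 1"
  shows "(l * a + (1 - l) * b) * \<phi> (y / (l * a + (1 - l) * b))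
         \<le> l * (a * \<phi> (y / a)) + (1 - l) * (b * \<phi> (y / b))"
proof (cases "y = 0")
  case True
  have "(l * a + (1 - l) * b) * \<phi> 0 = l * (a * \<phi> 0) + (1 - l) * (b * \<phi> 0)"
    by (simp add: algebra_simps)
  then show ?thesis using True by simp
next
  case False
  then have y0: "y > 0" using y by simp
  then have a0: "a > 0" and b0: "b > 0" using pos by auto
  define x where "x = l * a + (1 - l) * b"
  have x0: "x > 0"
  proof (cases "l = 0")
    case True then show ?thesis using b0 by (simp add: x_def)
  next
    case False
    then have "l * a > 0" using l a0 by simp
    moreover have "(1 - l) * b \<ge> 0" using l b0 by simp
    ultimately show ?thesis by (simp add: x_def)
  qed
  define m where "m = l * a / x"
  have m01: "0 \<le> m" "m \<le> 1"
  proof -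
    show "0 \<le> m" using l a0 x0 by (simp add: m_def)
    have "l * a \<le> x" using l b0 by (simp add: x_def)
    then show "m \<le> 1" using x0 by (simp add: m_def)
  qed
  have om: "1 - m = (1 - l) * b / x"
  proof -
    have "1 - m = (x - l * a) / x" using x0 by (simp add: m_def diff_divide_distrib)
    also have "x - l * a = (1 - l) * b" by (simp add: x_def)
    finally show ?thesis .
  qed
  have yx: "y / x = m * (y / a) + (1 - m) * (y / b)"
  proof -
    have "m * (y / a) = l * y / x" using a0 by (simp add: m_def)
    moreover have "(1 - m) * (y / b) = (1 - l) * y / x" using b0 by (simp add: om)
    moreover have "l * y / x + (1 - l) * y / x = y / x"
      by (simp add: add_divide_distrib[symmetric] algebra_simps)
    ultimately show ?thesis by simp
  qed
  have ya: "y / a \<in> {0..}" "y / b \<in> {0..}" using y a0 b0 by auto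
  have "\<phi> (y / x) \<le> m * \<phi> (y / a) + (1 - m) * \<phi> (y / b)"
    using convex_onD[OF cv, of "1 - m" "y / a" "y / b"] m01 ya yx by simp
  then have "x * \<phi> (y / x) \<le> x * (m * \<phi> (y / a) + (1 - m) * \<phi> (y / b))"
    using x0 by (simp add: mult_left_mono)
  also have "\<dots> = (x * m) * \<phi> (y / a) + (x * (1 - m)) * \<phi> (y / b)"
    by (simp add: algebra_simps)
  also have "x * m = l * a" using x0 by (simp add: m_def)
  also have "x * (1 - m) = (1 - l) * b" using x0 by (simp add: om)
  also have "l * a * \<phi> (y / a) + (1 - l) * b * \<phi> (y / b) = l * (a * \<phi> (y / a)) + (1 - l) * (b * \<phi> (y / b))"
    by (simp add: mult.assoc)
  finally show ?thesis by (simp add: x_def)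
qed

lemma Hconv_x:
  fixes \<phi> :: "real \<Rightarrow> real"
  assumes cv: "convex_on {0..} \<phi>" and t: "0 \<le> t" "t \<le> 1"
    and a: "0 < a" "a \<le> 1" and b: "0 < b" "b \<le> 1" and lt: "t < 1 \<longrightarrow> a < 1 \<and> b < 1"
    and l: "0 \<le> l" "l \<le> 1"
  shows "Hf \<phi> (l * a + (1 - l) * b) t \<le> l * Hf \<phi> a t + (1 - l) * Hf \<phi> b t"
proof -
  have p1: "(l * a + (1 - l) * b) * \<phi> (t / (l * a + (1 - l) * b))
         \<le> l * (a * \<phi> (t / a)) + (1 - l) * (b * \<phi> (t / b))"
    using persp[OF cv t(1) _ _ _ l] a b by auto
  have p2: "(l * (1 - a) + (1 - l) * (1 - b)) * \<phi> ((1 - t) / (l * (1 - a) + (1 - l) * (1 - b)))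
         \<le> l * ((1 - a) * \<phi> ((1 - t) / (1 - a))) + (1 - l) * ((1 - b) * \<phi> ((1 - t) / (1 - b)))"
    using persp[OF cv _ _ _ _ l, of "1 - t" "1 - a" "1 - b"] a b t lt by auto
  have e: "l * (1 - a) + (1 - l) * (1 - b) = 1 - (l * a + (1 - l) * b)" by (simp add: algebra_simps)
  show ?thesis using p1 p2 unfolding e Hf_def by (simp add: algebra_simps)
qed

lemma Hconv_t:
  fixes \<phi> :: "real \<Rightarrow> real"
  assumes cv: "convex_on {0..} \<phi>" and x: "0 < x" "x < 1"
    and a: "0 \<le> a" "a \<le> 1" and b: "0 \<le> b" "b \<le> 1" and l: "0 \<le> l" "l \<le> 1"
  shows "Hf \<phi> x (l * a + (1 - l) * b) \<le> l * Hf \<phi> x a + (1 - l) * Hf \<phi> x b"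
proof -
  have c1: "\<phi> (l * (a / x) + (1 - l) * (b / x)) \<le> l * \<phi> (a / x) + (1 - l) * \<phi> (b / x)"
    using convex_onD[OF cv, of "1 - l" "a / x" "b / x"] l a b x by (simp add: algebra_simps)
  have c2: "\<phi> (l * ((1 - a) / (1 - x)) + (1 - l) * ((1 - b) / (1 - x)))
      \<le> l * \<phi> ((1 - a) / (1 - x)) + (1 - l) * \<phi> ((1 - b) / (1 - x))"
    using convex_onD[OF cv, of "1 - l" "(1 - a) / (1 - x)" "(1 - b) / (1 - x)"] l a b x by (simp add: algebra_simps)
  have e1: "(l * a + (1 - l) * b) / x = l * (a / x) + (1 - l) * (b / x)"
    by (simp add: add_divide_distrib)
  have e2: "(1 - (l * a + (1 - l) * b)) / (1 - x) = l * ((1 - a) / (1 - x)) + (1 - l) * ((1 - b) / (1 - x))"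
  proof -
    have "1 - (l * a + (1 - l) * b) = l * (1 - a) + (1 - l) * (1 - b)" by (simp add: algebra_simps)
    then show ?thesis by (simp add: add_divide_distrib)
  qed
  have "x * \<phi> (l * (a / x) + (1 - l) * (b / x)) \<le> x * (l * \<phi> (a / x) + (1 - l) * \<phi> (b / x))"
    using c1 x by (intro mult_left_mono) auto
  moreover have "(1 - x) * \<phi> (l * ((1 - a) / (1 - x)) + (1 - l) * ((1 - b) / (1 - x)))
      \<le> (1 - x) * (l * \<phi> ((1 - a) / (1 - x)) + (1 - l) * \<phi> ((1 - b) / (1 - x)))"
    using c2 x by (intro mult_left_mono) auto
  ultimately show ?thesis unfolding Hf_def e1 e2 by (simp add: algebra_simps)
qed

lemma Hdiag:
  assumes "\<phi> 1 = 0" "0 < t" "t \<le> 1"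
  shows "Hf \<phi> t t = 0"
proof (cases "t = 1")
  case True then show ?thesis using assms by (simp add: Hf_def)
next
  case False then show ?thesis using assms by (simp add: Hf_def)
qed

lemma phi_cont:
  fixes \<phi> :: "real \<Rightarrow> real"
  assumes "convex_on {0..} \<phi>"
  shows "continuous_on {0<..} \<phi>"
proof -
  have "convex_on {0<..} \<phi>" by (rule convex_on_subset[OF assms]) auto
  then show ?thesis by (intro convex_on_continuous) auto
qed

lemma Hcont_t:
  fixes \<phi> :: "real \<Rightarrow> real"
  assumes cv: "convex_on {0..} \<phi>" and x: "0 < x" "x < 1"
  shows "continuous_on {0<..<1} (Hf \<phi> x)"
proof -
  have pc: "continuous_on {0<..} \<phi>" by (rule phi_cont[OF cv])
  have c1: "continuous_on {0<..<1} (\<lambda>t. \<phi> (t / x))"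
    by (rule continuous_on_compose2[OF pc]) (use x in \<open>auto intro!: continuous_intros\<close>)
  have c2: "continuous_on {0<..<1} (\<lambda>t. \<phi> ((1 - t) / (1 - x)))"
    by (rule continuous_on_compose2[OF pc]) (use x in \<open>auto intro!: continuous_intros\<close>)
  show ?thesis unfolding Hf_def using c1 c2 by (intro continuous_intros)
qed

lemma Hcont_x:
  fixes \<phi> :: "real \<Rightarrow> real"
  assumes cv: "convex_on {0..} \<phi>" and l: "0 < l" "l < 1" and a: "0 < a"
  shows "continuous_on {a..l} (\<lambda>x. Hf \<phi> x l)"
proof -
  have pc: "continuous_on {0<..} \<phi>" by (rule phi_cont[OF cv])
  have c1: "continuous_on {a..l} (\<lambda>x. \<phi> (l / x))"
    by (rule continuous_on_compose2[OF pc]) (use a l in \<open>auto intro!: continuous_intros\<close>)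
  have c2: "continuous_on {a..l} (\<lambda>x. \<phi> ((1 - l) / (1 - x)))"
    by (rule continuous_on_compose2[OF pc]) (use a l in \<open>auto intro!: continuous_intros\<close>)
  show ?thesis unfolding Hf_def using c1 c2 by (intro continuous_intros)
qed

definition Sset :: "(real \<Rightarrow> real) \<Rightarrow> real \<Rightarrow> real \<Rightarrow> real set" where
  "Sset \<phi> \<delta> x = {t. x \<le> t \<and> t \<le> 1 \<and> Hf \<phi> x t \<le> \<delta>}"

lemma g_eq: "0 < x \<Longrightarrow> x < 1 \<Longrightarrow> g_phi \<phi> \<delta> x = Sup (Sset \<phi> \<delta> x)"
  by (simp add: g_phi_def Sset_def Hf_def)

context
  fixes \<phi> :: "real \<Rightarrow> real" and \<delta> :: real
  assumes cv: "convex_on {0..} \<phi>" and \<phi>1: "\<phi> 1 = 0" and \<delta>: "\<delta> > 0"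
begin

lemma S_facts:
  assumes x: "0 < x" "x < 1"
  shows "x \<in> Sset \<phi> \<delta> x" "bdd_above (Sset \<phi> \<delta> x)" "Sset \<phi> \<delta> x \<noteq> {}"
    "\<And>t. t \<in> Sset \<phi> \<delta> x \<Longrightarrow> t \<le> g_phi \<phi> \<delta> x"
    "x \<le> g_phi \<phi> \<delta> x" "g_phi \<phi> \<delta> x \<le> 1"
proof -
  show xS: "x \<in> Sset \<phi> \<delta> x" using Hdiag[of \<phi>, OF \<phi>1 x(1)] x \<delta> by (simp add: Sset_def)
  show bdd: "bdd_above (Sset \<phi> \<delta> x)" by (rule bdd_aboveI[of _ 1]) (auto simp: Sset_def)
  show ne: "Sset \<phi> \<delta> x \<noteq> {}" using xS by auto
  show le: "\<And>t. t \<in> Sset \<phi> \<delta> x \<Longrightarrow> t \<le> g_phi \<phi> \<delta> x"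
    using cSup_upper[OF _ bdd] g_eq[OF x] by simp
  show "x \<le> g_phi \<phi> \<delta> x" by (rule le[OF xS])
  show "g_phi \<phi> \<delta> x \<le> 1" unfolding g_eq[OF x] by (rule cSup_least[OF ne]) (auto simp: Sset_def)
qed

lemma g_range: "0 \<le> x \<Longrightarrow> x \<le> 1 \<Longrightarrow> x \<le> g_phi \<phi> \<delta> x \<and> g_phi \<phi> \<delta> x \<le> 1"
  using S_facts(5,6)[of x] by (cases "x = 0 \<or> x = 1") (auto simp: g_phi_def)

lemma near:
  fixes f :: "real \<Rightarrow> real"
  assumes c: "continuous_on {0<..<1} f" and t: "0 < t" "t < 1" and e: "e > 0"
  shows "\<exists>d>0. \<forall>s. \<bar>s - t\<bar> < d \<longrightarrow> \<bar>f s - f t\<bar> < e"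
proof -
  have "isCont f t" using c t by (simp add: continuous_on_eq_continuous_at)
  then have "f \<midarrow>t\<rightarrow> f t" by (simp add: isCont_def)
  then obtain d where d: "d > 0" "\<forall>x. x \<noteq> t \<and> norm (x - t) < d \<longrightarrow> norm (f x - f t) < e"
    using e unfolding LIM_eq by blast
  show ?thesis
  proof (intro exI[of _ d] conjI allI impI)
    fix s assume "\<bar>s - t\<bar> < d"
    then show "\<bar>f s - f t\<bar> < e" using d e by (cases "s = t") auto
  qed (rule d(1))
qed

lemma g_attain:
  assumes x: "0 < x" "x < 1" and g1: "g_phi \<phi> \<delta> x < 1"
  shows "Hf \<phi> x (g_phi \<phi> \<delta> x) \<le> \<delta>"
proof (rule ccontr)
  define T where "T = g_phi \<phi> \<delta> x"
  assume "\<not> Hf \<phi> x (g_phi \<phi> \<delta> x) \<le> \<delta>"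
  then have gt: "Hf \<phi> x T > \<delta>" by (simp add: T_def)
  have T: "0 < T" "T < 1" using S_facts(5)[OF x] x g1 by (auto simp: T_def)
  obtain d where d: "d > 0" "\<forall>s. \<bar>s - T\<bar> < d \<longrightarrow> \<bar>Hf \<phi> x s - Hf \<phi> x T\<bar> < Hf \<phi> x T - \<delta>"
    using near[OF Hcont_t[OF cv x] T, of "Hf \<phi> x T - \<delta>"] gt by auto
  have "T - d < Sup (Sset \<phi> \<delta> x)" using d(1) g_eq[OF x] by (simp add: T_def)
  then obtain t where t: "t \<in> Sset \<phi> \<delta> x" "T - d < t"
    using less_cSup_iff[OF S_facts(3)[OF x] S_facts(2)[OF x]] by blast
  have "t \<le> T" using S_facts(4)[OF x t(1)] by (simp add: T_def)
  then have "\<bar>t - T\<bar> < d" using t(2) by simp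
  then have "Hf \<phi> x t > \<delta>" using d(2) by force
  then show False using t(1) by (simp add: Sset_def)
qed

lemma H_drop:
  assumes x: "0 < x1" "x1 < x2" "x2 < t" "t \<le> 1" and H: "Hf \<phi> x1 t \<le> \<delta>"
  shows "Hf \<phi> x2 t < \<delta>"
proof -
  define l where "l = (t - x2) / (t - x1)"
  have l: "0 < l" "l < 1" using x by (auto simp: l_def)
  have "l * (t - x1) = t - x2" using x by (simp add: l_def)
  then have e: "l * x1 + (1 - l) * t = x2" by (simp add: algebra_simps)
  have "Hf \<phi> (l * x1 + (1 - l) * t) t \<le> l * Hf \<phi> x1 t + (1 - l) * Hf \<phi> t t"
    by (rule Hconv_x[OF cv]) (use x l in auto)
  also have "Hf \<phi> t t = 0" using Hdiag[of \<phi>, OF \<phi>1] x by simp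
  finally have le: "Hf \<phi> x2 t \<le> l * Hf \<phi> x1 t" unfolding e by simp
  show ?thesis
  proof (cases "Hf \<phi> x1 t \<ge> 0")
    case True
    have "l * Hf \<phi> x1 t \<le> l * \<delta>" using H l by (simp add: mult_left_mono)
    also have "\<dots> < \<delta>" using l \<delta> by simp
    finally show ?thesis using le by simp
  next
    case False
    then have "l * Hf \<phi> x1 t < 0" using l by (simp add: mult_pos_neg)
    then show ?thesis using le \<delta> by simp
  qed
qed

lemma g_mono:
  assumes x: "0 \<le> x1" "x1 \<le> x2" "x2 \<le> 1"
  shows "g_phi \<phi> \<delta> x1 \<le> g_phi \<phi> \<delta> x2"
proof -
  have r1: "x1 \<le> g_phi \<phi> \<delta> x1 \<and> g_phi \<phi> \<delta> x1 \<le> 1" using g_range x by simp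
  have r2: "x2 \<le> g_phi \<phi> \<delta> x2 \<and> g_phi \<phi> \<delta> x2 \<le> 1" using g_range x by simp
  show ?thesis
  proof (cases "x1 = 0 \<or> x2 = 1 \<or> x1 = x2")
    case True
    then show ?thesis
    proof (elim disjE)
      assume "x1 = 0" then show ?thesis using r2 x by (simp add: g_phi_def)
    next
      assume "x2 = 1" then show ?thesis using r1 by (simp add: g_phi_def)
    qed simp
  next
    case False
    then have xx: "0 < x1" "x1 < x2" "x2 < 1" using x by auto
    have x1': "x1 < 1" using xx by simp
    have x2': "0 < x2" using xx by simp
    show ?thesis unfolding g_eq[OF xx(1) x1']
    proof (rule cSup_least[OF S_facts(3)[OF xx(1) x1']])
      fix t assume t: "t \<in> Sset \<phi> \<delta> x1"
      show "t \<le> g_phi \<phi> \<delta> x2"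
      proof (cases "t \<le> x2")
        case True then show ?thesis using r2 by simp
      next
        case False
        then have "Hf \<phi> x2 t < \<delta>" using H_drop[OF xx(1,2) _ _] t by (simp add: Sset_def)
        then have "t \<in> Sset \<phi> \<delta> x2" using t False by (simp add: Sset_def)
        then show ?thesis by (rule S_facts(4)[OF x2' xx(3)])
      qed
    qed
  qed
qed

lemma g_strict:
  assumes x: "0 \<le> x1" "x1 < x2" "x2 \<le> 1" and g1: "g_phi \<phi> \<delta> x1 < 1"
  shows "g_phi \<phi> \<delta> x1 < g_phi \<phi> \<delta> x2"
proof -
  have r2: "x2 \<le> g_phi \<phi> \<delta> x2 \<and> g_phi \<phi> \<delta> x2 \<le> 1" using g_range x by simp
  show ?thesis
  proof (cases "x1 = 0 \<or> x2 = 1")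
    case True
    then show ?thesis
    proof
      assume "x1 = 0" then show ?thesis using r2 x by (simp add: g_phi_def)
    next
      assume "x2 = 1" then show ?thesis using g1 by (simp add: g_phi_def)
    qed
  next
    case False
    then have xx: "0 < x1" "x1 < x2" "x2 < 1" using x by auto
    have x1': "x1 < 1" using xx by simp
    have x2': "0 < x2" using xx by simp
    define T where "T = g_phi \<phi> \<delta> x1"
    show ?thesis
    proof (cases "T < x2")
      case True then show ?thesis using r2 by (simp add: T_def)
    next
      case False
      have HT: "Hf \<phi> x2 T < \<delta>"
      proof (cases "T = x2")
        case True then show ?thesis using Hdiag[of \<phi>, OF \<phi>1 x2'] \<delta> xx by simp
      next
        case False
        then have "x2 < T" using \<open>\<not> T < x2\<close> by simp
        moreover have "Hf \<phi> x1 T \<le> \<delta>" using g_attain[OF xx(1) x1' g1] by (simp add: T_def)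
        ultimately show ?thesis using H_drop[OF xx(1,2)] g1 by (simp add: T_def)
      qed
      have T: "0 < T" "T < 1" using False x2' g1 by (auto simp: T_def)
      obtain d where d: "d > 0" "\<forall>s. \<bar>s - T\<bar> < d \<longrightarrow> \<bar>Hf \<phi> x2 s - Hf \<phi> x2 T\<bar> < \<delta> - Hf \<phi> x2 T"
        using near[OF Hcont_t[OF cv x2' xx(3)] T, of "\<delta> - Hf \<phi> x2 T"] HT by auto
      define t' where "t' = T + min (d / 2) ((1 - T) / 2)"
      have m1: "0 < min (d / 2) ((1 - T) / 2)" using d(1) T by simp
      have m2: "min (d / 2) ((1 - T) / 2) \<le> d / 2" by (rule min.cobounded1)
      have m3: "min (d / 2) ((1 - T) / 2) \<le> (1 - T) / 2" by (rule min.cobounded2)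
      note m = m1 m2 m3
      have t': "T < t'" "t' < 1" "\<bar>t' - T\<bar> < d" unfolding t'_def using m d(1) T by auto
      have "Hf \<phi> x2 t' < \<delta>" using d(2) t'(3) by force
      then have "t' \<in> Sset \<phi> \<delta> x2" using t' False by (simp add: Sset_def)
      then have "t' \<le> g_phi \<phi> \<delta> x2" by (rule S_facts(4)[OF x2' xx(3)])
      then show ?thesis using t' by (simp add: T_def)
    qed
  qed
qed

lemma g_surj:
  assumes sl: "filterlim (\<lambda>x. \<phi> x / x) at_top at_top" and l: "0 < l" "l < 1"
  shows "\<exists>u. 0 < u \<and> u < 1 \<and> g_phi \<phi> \<delta> u = l"
proof -
  obtain s where s: "\<forall>z\<ge>0. \<phi> z \<ge> \<phi> 1 + s * (z - 1)" using supp_line[OF cv, of 1] by auto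
  have lowb: "\<phi> w \<ge> - \<bar>s\<bar>" if "0 \<le> w" "w \<le> 1" for w
  proof -
    have "\<phi> w \<ge> s * (w - 1)" using s that \<phi>1 by auto
    moreover have "s * (w - 1) \<ge> - \<bar>s\<bar>"
    proof -
      have "\<bar>s * (w - 1)\<bar> \<le> \<bar>s\<bar>" using that by (simp add: abs_mult mult_left_le)
      then show ?thesis by linarith
    qed
    ultimately show ?thesis by linarith
  qed
  define K where "K = (\<delta> + \<bar>s\<bar>) / l"
  have "\<forall>\<^sub>F z in at_top. K \<le> \<phi> z / z" using sl by (simp add: filterlim_at_top)
  then obtain Z where Z: "\<forall>z\<ge>Z. K \<le> \<phi> z / z" by (auto simp: eventually_at_top_linorder)
  define z0 where "z0 = max Z 2"
  have z0: "z0 \<ge> Z" "z0 \<ge> 2" by (auto simp: z0_def)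
  define xs where "xs = l / z0"
  have xs: "0 < xs" "xs < l"
  proof -
    show "0 < xs" using l z0 by (simp add: xs_def)
    have "l / z0 \<le> l / 2" using l z0 by (intro divide_left_mono) auto
    moreover have "l / 2 < l" using l by simp
    ultimately show "xs < l" unfolding xs_def by linarith
  qed
  have first: "xs * \<phi> (l / xs) \<ge> \<delta> + \<bar>s\<bar>"
  proof -
    have lx: "l / xs = z0" using l z0 by (simp add: xs_def)
    have "K \<le> \<phi> z0 / z0" using Z z0 by simp
    then have "l * K \<le> l * (\<phi> z0 / z0)" using l by (intro mult_left_mono) auto
    moreover have "l * K = \<delta> + \<bar>s\<bar>" using l by (simp add: K_def)
    moreover have "l * (\<phi> z0 / z0) = xs * \<phi> z0" by (simp add: xs_def)
    ultimately show ?thesis using lx by simp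
  qed
  have w: "0 \<le> (1 - l) / (1 - xs)" "(1 - l) / (1 - xs) \<le> 1" using xs l by auto
  have second: "(1 - xs) * \<phi> ((1 - l) / (1 - xs)) \<ge> - \<bar>s\<bar>"
  proof -
    have "(1 - xs) * \<phi> ((1 - l) / (1 - xs)) \<ge> (1 - xs) * (- \<bar>s\<bar>)"
      using lowb[OF w] xs l by (intro mult_left_mono) auto
    moreover have "(1 - xs) * (- \<bar>s\<bar>) \<ge> - \<bar>s\<bar>"
    proof -
      have "(1 - xs) * \<bar>s\<bar> \<le> \<bar>s\<bar>" by (rule mult_left_le_one_le) (use xs l in auto)
      then show ?thesis by (simp only: mult_minus_right)
    qed
    ultimately show ?thesis by linarith
  qed
  have big: "Hf \<phi> xs l \<ge> \<delta>" using first second by (simp add: Hf_def)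
  have zero: "Hf \<phi> l l = 0" using Hdiag[of \<phi>, OF \<phi>1] l by simp
  obtain x0 where x0: "xs \<le> x0" "x0 \<le> l" "Hf \<phi> x0 l = \<delta>"
    using IVT2'[of "\<lambda>x. Hf \<phi> x l" l \<delta> xs, OF _ big _ Hcont_x[OF cv l xs(1)]] zero \<delta> xs by auto
  have x0l: "x0 < l" using x0 zero \<delta> by (cases "x0 = l") auto
  have x0p: "0 < x0" "x0 < 1" using x0 xs x0l l by auto
  have lS: "l \<in> Sset \<phi> \<delta> x0" using x0 x0l l by (simp add: Sset_def)
  have "g_phi \<phi> \<delta> x0 = l"
  proof (rule antisym)
    show "l \<le> g_phi \<phi> \<delta> x0" by (rule S_facts(4)[OF x0p lS])
    show "g_phi \<phi> \<delta> x0 \<le> l" unfolding g_eq[OF x0p]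
    proof (rule cSup_least[OF S_facts(3)[OF x0p]])
      fix t assume t: "t \<in> Sset \<phi> \<delta> x0"
      show "t \<le> l"
      proof (rule ccontr)
        assume "\<not> t \<le> l"
        then have tl: "l < t" by simp
        define la where "la = (t - l) / (t - x0)"
        have la: "0 < la" "la < 1" using tl x0l by (auto simp: la_def)
        have "la * (t - x0) = t - l" using tl x0l by (simp add: la_def)
        then have e: "la * x0 + (1 - la) * t = l" by (simp add: algebra_simps)
        have t1: "t \<le> 1" "Hf \<phi> x0 t \<le> \<delta>" using t by (auto simp: Sset_def)
        have "Hf \<phi> x0 (la * x0 + (1 - la) * t) \<le> la * Hf \<phi> x0 x0 + (1 - la) * Hf \<phi> x0 t"
          by (rule Hconv_t[OF cv x0p]) (use x0p t1 tl x0l la in auto)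
        also have "Hf \<phi> x0 x0 = 0" using Hdiag[of \<phi>, OF \<phi>1] x0p by simp
        finally have "\<delta> \<le> (1 - la) * Hf \<phi> x0 t" unfolding e using x0 by simp
        also have "\<dots> \<le> (1 - la) * \<delta>" using t1 la by (intro mult_left_mono) auto
        finally have "la * \<delta> \<le> 0" by (simp add: algebra_simps)
        then show False using la \<delta> by (simp add: mult_le_0_iff)
      qed
    qed
  qed
  then show ?thesis using x0p by blast
qed

end

lemma inv01_props:
  fixes g :: "real \<Rightarrow> real"
  assumes g0: "g 0 = 0" and g1: "g 1 = 1"
    and mo: "\<And>x y. 0 \<le> x \<Longrightarrow> x \<le> y \<Longrightarrow> y \<le> 1 \<Longrightarrow> g x \<le> g y"
    and st: "\<And>x y. 0 \<le> x \<Longrightarrow> x < y \<Longrightarrow> y \<le> 1 \<Longrightarrow> g x < 1 \<Longrightarrow> g x < g y"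
    and su: "\<And>l. 0 < l \<Longrightarrow> l < 1 \<Longrightarrow> \<exists>u. 0 < u \<and> u < 1 \<and> g u = l"
    and l: "0 < l" "l < 1"
  shows "0 < inv01 g l \<and> inv01 g l < 1 \<and> g (inv01 g l) = l"
    and "\<And>p. 0 \<le> p \<Longrightarrow> p \<le> 1 \<Longrightarrow> (g p \<le> l \<longleftrightarrow> p \<le> inv01 g l)"
proof -
  obtain u where u: "0 < u" "u < 1" "g u = l" using su[OF l] by blast
  have uniq: "v = u" if v: "0 < v \<and> v < 1 \<and> g v = l" for v
  proof (rule ccontr)
    assume "v \<noteq> u"
    then consider "v < u" | "u < v" by linarith
    then show False
    proof cases
      case 1 then have "g v < g u" using st[of v u] v u l by auto
      then show False using v u by simp
    next
      case 2 then have "g u < g v" using st[of u v] v u l by auto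
      then show False using v u by simp
    qed
  qed
  have inv: "inv01 g l = u" unfolding inv01_def
  proof (rule the_equality)
    show "0 < u \<and> u < 1 \<and> g u = l" using u by simp
    fix v assume "0 < v \<and> v < 1 \<and> g v = l" then show "v = u" by (rule uniq)
  qed
  show "0 < inv01 g l \<and> inv01 g l < 1 \<and> g (inv01 g l) = l" using u inv by simp
  fix p :: real assume p: "0 \<le> p" "p \<le> 1"
  show "g p \<le> l \<longleftrightarrow> p \<le> inv01 g l"
  proof
    assume "g p \<le> l"
    show "p \<le> inv01 g l"
    proof (rule ccontr)
      assume "\<not> p \<le> inv01 g l"
      then have "u < p" using inv by simp
      then have "g u < g p" using st[of u p] u p l by auto
      then show False using \<open>g p \<le> l\<close> u by simp
    qed
  next
    assume "p \<le> inv01 g l"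
    then show "g p \<le> l" using mo[of p u] p u inv by simp
  qed
qed

lemma inv01_Lambda:
  fixes g :: "real \<Rightarrow> real"
  assumes g0: "g 0 = 0" and g1: "g 1 = 1"
    and mo: "\<And>x y. 0 \<le> x \<Longrightarrow> x \<le> y \<Longrightarrow> y \<le> 1 \<Longrightarrow> g x \<le> g y"
    and st: "\<And>x y. 0 \<le> x \<Longrightarrow> x < y \<Longrightarrow> y \<le> 1 \<Longrightarrow> g x < 1 \<Longrightarrow> g x < g y"
    and su: "\<And>l. 0 < l \<Longrightarrow> l < 1 \<Longrightarrow> \<exists>u. 0 < u \<and> u < 1 \<and> g u = l"
    and L: "L \<in> H_I"
  shows "mono (\<lambda>y. inv01 g (L y)) \<and> (\<forall>y. 0 < inv01 g (L y) \<and> inv01 g (L y) < 1)"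
    and "\<forall>x p. 0 \<le> p \<and> p \<le> 1 \<longrightarrow> (g p \<le> L x \<longleftrightarrow> p \<le> inv01 g (L x))"
proof -
  have Lm: "mono L" and L01: "\<forall>x. 0 < L x \<and> L x < 1" using L by (auto simp: H_I_def)
  note P = inv01_props[OF g0 g1 mo st su]
  show "\<forall>x p. 0 \<le> p \<and> p \<le> 1 \<longrightarrow> (g p \<le> L x \<longleftrightarrow> p \<le> inv01 g (L x))"
    using P(2) L01 by blast
  have "mono (\<lambda>y. inv01 g (L y))"
  proof (rule monoI)
    fix y1 y2 :: real assume "y1 \<le> y2"
    then have le: "L y1 \<le> L y2" using Lm by (simp add: monoD)
    have a: "0 < inv01 g (L y1) \<and> inv01 g (L y1) < 1 \<and> g (inv01 g (L y1)) = L y1"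
      using P(1) L01 by blast
    have "g (inv01 g (L y1)) \<le> L y2" using a le by simp
    then show "inv01 g (L y1) \<le> inv01 g (L y2)" using P(2)[of "L y2" "inv01 g (L y1)"] L01 a by auto
  qed
  then show "mono (\<lambda>y. inv01 g (L y)) \<and> (\<forall>y. 0 < inv01 g (L y) \<and> inv01 g (L y) < 1)"
    using P(1) L01 by blast
qed

lemma band_g:
  assumes k: "0 \<le> k1" "k1 < 1" "1 < k2"
  shows "g_band k1 k2 0 = 0" "g_band k1 k2 1 = 1"
    "\<And>x y. 0 \<le> x \<Longrightarrow> x \<le> y \<Longrightarrow> y \<le> 1 \<Longrightarrow> g_band k1 k2 x \<le> g_band k1 k2 y"
    "\<And>x y. 0 \<le> x \<Longrightarrow> x < y \<Longrightarrow> y \<le> 1 \<Longrightarrow> g_band k1 k2 x < 1 \<Longrightarrow> g_band k1 k2 x < g_band k1 k2 y"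
    "\<And>l. 0 < l \<Longrightarrow> l < 1 \<Longrightarrow> \<exists>u. 0 < u \<and> u < 1 \<and> g_band k1 k2 u = l"
proof -
  show g0: "g_band k1 k2 0 = 0" using k by (simp add: g_band_def)
  show g1: "g_band k1 k2 1 = 1" using k by (simp add: g_band_def)
  show "g_band k1 k2 x \<le> g_band k1 k2 y" if "0 \<le> x" "x \<le> y" "y \<le> 1" for x y
  proof -
    have "k2 * x \<le> k2 * y" using that k by (intro mult_left_mono) auto
    moreover have "k1 * x \<le> k1 * y" using that k by (intro mult_left_mono) auto
    ultimately show ?thesis unfolding g_band_def by linarith
  qed
  show "g_band k1 k2 x < g_band k1 k2 y" if h: "0 \<le> x" "x < y" "y \<le> 1" "g_band k1 k2 x < 1" for x y
  proof -
    have a: "k2 * x < k2 * y" using h k by simp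
    have b: "g_band k1 k2 x < k1 * y + 1 - k1"
    proof (cases "k1 = 0")
      case True then show ?thesis using h by simp
    next
      case False
      then have "k1 * x < k1 * y" using h k by simp
      then show ?thesis unfolding g_band_def by linarith
    qed
    have "g_band k1 k2 x \<le> k2 * x" by (simp add: g_band_def)
    then show ?thesis using a b unfolding g_band_def by linarith
  qed
  show "\<exists>u. 0 < u \<and> u < 1 \<and> g_band k1 k2 u = l" if l: "0 < l" "l < 1" for l
  proof -
    have e: "g_band k1 k2 = (\<lambda>x. min (k2 * x) (k1 * x + 1 - k1))" by (simp add: g_band_def fun_eq_iff)
    have c1: "continuous_on {0..1} (\<lambda>x::real. k2 * x)" by (intro continuous_on_mult continuous_on_const continuous_on_id)
    have c2: "continuous_on {0..1} (\<lambda>x::real. k1 * x + 1 - k1)"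
      by (intro continuous_on_diff continuous_on_add continuous_on_mult continuous_on_const continuous_on_id)
    have c: "continuous_on {0..1} (g_band k1 k2)" unfolding e by (rule continuous_on_min[OF c1 c2])
    have i1: "g_band k1 k2 0 \<le> l" unfolding g0 using l(1) by linarith
    have i2: "l \<le> g_band k1 k2 1" unfolding g1 using l(2) by linarith
    have "\<exists>x. 0 \<le> x \<and> x \<le> 1 \<and> g_band k1 k2 x = l"
      by (rule IVT'[OF i1 i2 zero_le_one c])
    then obtain u where u: "0 \<le> u" "u \<le> 1" "g_band k1 k2 u = l" by blast
    have "u \<noteq> 0" "u \<noteq> 1" using u g0 g1 l by auto
    then have "0 < u" "u < 1" using u by auto
    then show ?thesis using u(3) by blast
  qed
qed

lemma M_abs: "prob_space M \<Longrightarrow> M \<in> abs_cont_probs M"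
  by (simp add: abs_cont_probs_def absolutely_continuous_def)

lemma RN_self: "prob_space M \<Longrightarrow> AE \<omega> in M. RN_deriv M M \<omega> = 1"
proof -
  assume P: "prob_space M"
  have sf: "sigma_finite_measure M" by (rule prob_space_imp_sigma_finite) fact
  have "AE x in M. 1 = RN_deriv M M x"
    by (rule sigma_finite_measure.RN_deriv_unique[OF sf]) (auto simp: density_1)
  then show ?thesis by (auto elim: AE_mp)
qed

lemma M_band:
  assumes "prob_space M" "k1 \<le> 1" "1 \<le> k2"
  shows "M \<in> ratio_band M k1 k2"
proof -
  have "AE \<omega> in M. ennreal k1 \<le> RN_deriv M M \<omega> \<and> RN_deriv M M \<omega> \<le> ennreal k2"
    using RN_self[OF assms(1)]
  proof eventually_elim
    case (elim \<omega>)
    have "ennreal k1 \<le> ennreal 1" "ennreal 1 \<le> ennreal k2" using assms by (auto intro: ennreal_leI)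
    then show ?case using elim by simp
  qed
  then show ?thesis using M_abs[OF assms(1)] by (simp add: ratio_band_def)
qed

lemma phi_meas:
  fixes \<phi> :: "real \<Rightarrow> real"
  assumes cv: "convex_on {0..} \<phi>" and Z: "Z \<in> borel_measurable M" and Z0: "\<forall>\<omega>. 0 \<le> Z \<omega>"
  shows "(\<lambda>\<omega>. \<phi> (Z \<omega>)) \<in> borel_measurable M"
proof -
  define \<psi> where "\<psi> z = (if z \<in> {0<..} then \<phi> z else \<phi> 0)" for z :: real
  have "\<psi> \<in> borel_measurable borel" unfolding \<psi>_def
    by (rule borel_measurable_continuous_on_if) (auto intro: phi_cont[OF cv] continuous_on_const)
  then have "(\<lambda>\<omega>. \<psi> (Z \<omega>)) \<in> borel_measurable M" using Z by (rule measurable_compose[rotated])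
  moreover have "\<psi> (Z \<omega>) = \<phi> (Z \<omega>)" for \<omega>
    using Z0[rule_format, of \<omega>] by (cases "Z \<omega> = 0") (auto simp: \<psi>_def)
  ultimately show ?thesis by simp
qed

lemma M_phi:
  fixes \<phi> :: "real \<Rightarrow> real"
  assumes P: "prob_space M" and cv: "convex_on {0..} \<phi>" and \<phi>1: "\<phi> 1 = 0" and \<delta>: "0 \<le> \<delta>"
  shows "M \<in> phi_ball M \<phi> \<delta>"
proof -
  have m: "(\<lambda>\<omega>. \<phi> (enn2real (RN_deriv M M \<omega>))) \<in> borel_measurable M"
    by (rule phi_meas[OF cv]) auto
  have ae: "AE \<omega> in M. (\<lambda>_. 0::real) \<omega> = \<phi> (enn2real (RN_deriv M M \<omega>))"
    using RN_self[OF P] by eventually_elim (simp add: \<phi>1)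
  have i: "integrable M (\<lambda>\<omega>. \<phi> (enn2real (RN_deriv M M \<omega>)))"
    by (rule integrable_cong_AE_imp[OF _ m ae]) simp
  have "(\<integral>\<omega>. \<phi> (enn2real (RN_deriv M M \<omega>)) \<partial>M) = (\<integral>\<omega>. 0 \<partial>M)"
    using ae m by (intro integral_cong_AE) (auto elim: AE_mp)
  then have "(\<integral>\<omega>. \<phi> (enn2real (RN_deriv M M \<omega>)) \<partial>M) \<le> \<delta>" using \<delta> by simp
  then show ?thesis using i M_abs[OF P] by (simp add: phi_ball_def)
qed

lemma Qs_basic: "Q \<in> abs_cont_probs M \<Longrightarrow> prob_space Q \<and> sets Q = sets M"
  by (simp add: abs_cont_probs_def)

lemma band_bounds:
  fixes M :: "'a measure"
  assumes P: "prob_space M" and k: "0 \<le> k1" "k1 < 1" "1 < k2"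
  shows "\<forall>Q\<in>ratio_band M k1 k2. \<forall>A\<in>sets M. measure Q A \<le> g_band k1 k2 (measure M A)"
    and "\<forall>A\<in>sets M. \<forall>c. c < g_band k1 k2 (measure M A) \<longrightarrow> (\<exists>Q\<in>ratio_band M k1 k2. c < measure Q A)"
    and "\<forall>Q\<in>ratio_band M k1 k2. prob_space Q \<and> sets Q = sets M"
proof -
  interpret prob_space M by fact
  show "\<forall>Q\<in>ratio_band M k1 k2. prob_space Q \<and> sets Q = sets M"
    by (auto simp: ratio_band_def abs_cont_probs_def)
  show "\<forall>Q\<in>ratio_band M k1 k2. \<forall>A\<in>sets M. measure Q A \<le> g_band k1 k2 (measure M A)"
  proof (intro ballI)
    fix Q A assume Q: "Q \<in> ratio_band M k1 k2" and A: "A \<in> sets M"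
    have k2: "0 \<le> k2" using k by simp
    show "measure Q A \<le> g_band k1 k2 (measure M A)"
      using band_upper[OF P Q k(1) k2 A] by (simp add: g_band_def right_diff_distrib)
  qed
  show "\<forall>A\<in>sets M. \<forall>c. c < g_band k1 k2 (measure M A) \<longrightarrow> (\<exists>Q\<in>ratio_band M k1 k2. c < measure Q A)"
  proof (intro ballI allI impI)
    fix A c assume A: "A \<in> sets M" and c: "c < g_band k1 k2 (measure M A)"
    define p where "p = measure M A"
    have Mb: "M \<in> ratio_band M k1 k2" using M_band[OF P] k by simp
    show "\<exists>Q\<in>ratio_band M k1 k2. c < measure Q A"
    proof (cases "p = 0 \<or> p = 1")
      case True
      then show ?thesis
      proof
        assume p0: "p = 0"
        then have "c < 0" using c k by (simp add: p_def g_band_def)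
        then show ?thesis using Mb p0 by (intro bexI[of _ M]) (auto simp: p_def)
      next
        assume p1: "p = 1"
        then have "c < 1" using c k by (simp add: p_def g_band_def)
        then show ?thesis using Mb p1 by (intro bexI[of _ M]) (auto simp: p_def)
      qed
    next
      case False
      have "0 \<le> p" "p \<le> 1" by (simp_all add: p_def)
      then have p: "0 < p" "p < 1" using False by auto
      define t where "t = g_band k1 k2 p"
      have tk2: "t \<le> k2 * p" and tk1: "t \<le> k1 * p + 1 - k1" by (simp_all add: t_def g_band_def)
      have "k1 * p \<le> k2 * p" using p k by (intro mult_right_mono) auto
      then have t0: "k1 * p \<le> t" using k p by (simp add: t_def g_band_def)
      have "k2 * p \<ge> 1 - k2 + k2 * p" using k by simp
      moreover have "k1 * p + 1 - k1 \<ge> 1 - k2 + k2 * p"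
      proof -
        have "0 \<le> (k2 - k1) * (1 - p)" using k p by simp
        then show ?thesis by (simp add: algebra_simps)
      qed
      ultimately have t1: "1 - k2 + k2 * p \<le> t" by (simp add: t_def g_band_def)
      have tr: "0 \<le> t" "t \<le> 1"
      proof -
        show "0 \<le> t" using t0 k p by (meson mult_nonneg_nonneg less_imp_le order_trans)
        show "t \<le> 1" using tk1 k p
        proof -
          have "k1 * p \<le> k1" using k p by (simp add: mult_left_le)
          then show ?thesis using tk1 by linarith
        qed
      qed
      define f where "f = (\<lambda>\<omega>. if \<omega> \<in> A then t / measure M A else (1 - t) / (1 - measure M A))"
      define Q where "Q = density M (\<lambda>\<omega>. ennreal (f \<omega>))"
      have pm: "0 < measure M A" "measure M A < 1" using p by (auto simp: p_def)
      note D0 = density_two[OF P A pm tr]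
      have D1: "Q \<in> abs_cont_probs M" using D0(1) by (simp add: Q_def f_def)
      have D2: "measure Q A = t" using D0(2) by (simp add: Q_def f_def)
      have D3: "AE \<omega> in M. RN_deriv M Q \<omega> = ennreal (f \<omega>)" using D0(3) by (simp add: Q_def f_def)
      note D = D1 D2 D3
      have fb: "k1 \<le> f \<omega> \<and> f \<omega> \<le> k2" for \<omega>
      proof (cases "\<omega> \<in> A")
        case True
        have "k1 \<le> t / p" using t0 p by (simp add: le_divide_eq)
        moreover have "t / p \<le> k2" using tk2 p by (simp add: divide_le_eq)
        ultimately show ?thesis using True by (simp add: f_def p_def)
      next
        case False
        have "k1 * (1 - p) \<le> 1 - t" using tk1 by (simp add: algebra_simps)
        then have "k1 \<le> (1 - t) / (1 - p)" using p by (simp add: le_divide_eq)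
        moreover have "1 - t \<le> k2 * (1 - p)" using t1 by (simp add: algebra_simps)
        then have "(1 - t) / (1 - p) \<le> k2" using p by (simp add: divide_le_eq)
        ultimately show ?thesis using False by (simp add: f_def p_def)
      qed
      have "AE \<omega> in M. ennreal k1 \<le> RN_deriv M Q \<omega> \<and> RN_deriv M Q \<omega> \<le> ennreal k2"
        using D(3)
      proof eventually_elim
        case (elim \<omega>)
        show ?case unfolding elim using fb[of \<omega>] by (auto intro: ennreal_leI)
      qed
      then have "Q \<in> ratio_band M k1 k2" using D(1) by (simp add: ratio_band_def)
      moreover have "c < measure Q A" using D(2) c by (simp add: t_def p_def)
      ultimately show ?thesis by blast
    qed
  qed
qed

lemma phi_bounds:
  fixes M :: "'a measure" and \<phi> :: "real \<Rightarrow> real"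
  assumes P: "prob_space M" and cv: "convex_on {0..} \<phi>" and \<phi>1: "\<phi> 1 = 0" and \<delta>: "\<delta> > 0"
  shows "\<forall>Q\<in>phi_ball M \<phi> \<delta>. \<forall>A\<in>sets M. measure Q A \<le> g_phi \<phi> \<delta> (measure M A)"
    and "\<forall>A\<in>sets M. \<forall>c. c < g_phi \<phi> \<delta> (measure M A) \<longrightarrow> (\<exists>Q\<in>phi_ball M \<phi> \<delta>. c < measure Q A)"
    and "\<forall>Q\<in>phi_ball M \<phi> \<delta>. prob_space Q \<and> sets Q = sets M"
proof -
  interpret prob_space M by fact
  note SF = S_facts[OF cv \<phi>1 \<delta>]
  show "\<forall>Q\<in>phi_ball M \<phi> \<delta>. prob_space Q \<and> sets Q = sets M"
    by (auto simp: phi_ball_def abs_cont_probs_def)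
  show "\<forall>Q\<in>phi_ball M \<phi> \<delta>. \<forall>A\<in>sets M. measure Q A \<le> g_phi \<phi> \<delta> (measure M A)"
  proof (intro ballI)
    fix Q A assume Q: "Q \<in> phi_ball M \<phi> \<delta>" and A: "A \<in> sets M"
    have Qa: "Q \<in> abs_cont_probs M" using Q by (simp add: phi_ball_def)
    have PQ: "prob_space Q" and sQ: "sets Q = sets M" and ac: "absolutely_continuous M Q"
      using Qa by (auto simp: abs_cont_probs_def)
    interpret Q: prob_space Q by fact
    define p where "p = measure M A"
    have "0 \<le> p" "p \<le> 1" by (simp_all add: p_def)
    then consider "p = 0" | "p = 1" | "0 < p \<and> p < 1" by linarith
    then show "measure Q A \<le> g_phi \<phi> \<delta> (measure M A)"
    proof cases
      case 1
      have "emeasure M A = 0" using 1 A by (simp add: p_def emeasure_eq_measure)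
      then have "A \<in> null_sets M" using A by auto
      then have "A \<in> null_sets Q" using ac by (auto simp: absolutely_continuous_def)
      then have "measure Q A = 0" by (rule measure_eq_0_null_sets)
      then show ?thesis using 1 by (simp add: p_def g_phi_def)
    next
      case 2
      have "measure Q A \<le> 1" by (rule Q.prob_le_1)
      then show ?thesis using 2 by (simp add: p_def g_phi_def)
    next
      case 3
      then have p: "0 < p" "p < 1" by auto
      show ?thesis
      proof (cases "measure Q A \<le> p")
        case True then show ?thesis using SF(5)[OF p] by (simp add: p_def)
      next
        case False
        have "p * \<phi> (measure Q A / p) + (1 - p) * \<phi> ((1 - measure Q A) / (1 - p)) \<le> \<delta>"
          using phi_upper[OF P cv Q A] p by (simp add: p_def)
        then have "measure Q A \<in> Sset \<phi> \<delta> p" using False Q.prob_le_1[of A]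
          by (simp add: Sset_def Hf_def)
        then show ?thesis using SF(4)[OF p] by (simp add: p_def)
      qed
    qed
  qed
  show "\<forall>A\<in>sets M. \<forall>c. c < g_phi \<phi> \<delta> (measure M A) \<longrightarrow> (\<exists>Q\<in>phi_ball M \<phi> \<delta>. c < measure Q A)"
  proof (intro ballI allI impI)
    fix A c assume A: "A \<in> sets M" and c: "c < g_phi \<phi> \<delta> (measure M A)"
    define p where "p = measure M A"
    have Mb: "M \<in> phi_ball M \<phi> \<delta>" using M_phi[OF P cv \<phi>1] \<delta> by simp
    have "0 \<le> p" "p \<le> 1" by (simp_all add: p_def)
    then consider "p = 0" | "p = 1" | "0 < p \<and> p < 1" by linarith
    then show "\<exists>Q\<in>phi_ball M \<phi> \<delta>. c < measure Q A"
    proof cases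
      case 1
      then have "c < 0" using c by (simp add: p_def g_phi_def)
      then show ?thesis using Mb 1 by (intro bexI[of _ M]) (auto simp: p_def)
    next
      case 2
      then have "c < 1" using c by (simp add: p_def g_phi_def)
      then show ?thesis using Mb 2 by (intro bexI[of _ M]) (auto simp: p_def)
    next
      case 3
      then have p: "0 < p" "p < 1" by auto
      have "c < Sup (Sset \<phi> \<delta> p)" using c g_eq[OF p] by (simp add: p_def)
      then obtain t where t: "t \<in> Sset \<phi> \<delta> p" "c < t"
        using less_cSup_iff[OF SF(3)[OF p] SF(2)[OF p]] by blast
      have tS: "p \<le> t" "t \<le> 1" "Hf \<phi> p t \<le> \<delta>" using t by (auto simp: Sset_def)
      have tr: "0 \<le> t" "t \<le> 1" using tS p by auto
      define f where "f = (\<lambda>\<omega>. if \<omega> \<in> A then t / measure M A else (1 - t) / (1 - measure M A))"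
      define Q where "Q = density M (\<lambda>\<omega>. ennreal (f \<omega>))"
      have pm: "0 < measure M A" "measure M A < 1" using p by (auto simp: p_def)
      note D0 = density_two[OF P A pm tr]
      have D1: "Q \<in> abs_cont_probs M" using D0(1) by (simp add: Q_def f_def)
      have D2: "measure Q A = t" using D0(2) by (simp add: Q_def f_def)
      have D3: "AE \<omega> in M. RN_deriv M Q \<omega> = ennreal (f \<omega>)" using D0(3) by (simp add: Q_def f_def)
      have D4: "f \<in> borel_measurable M" "\<forall>\<omega>. 0 \<le> f \<omega>" using D0(4,5) by (simp_all add: f_def)
      define h where "h \<omega> = \<phi> (t / p) * indicator A \<omega> + \<phi> ((1 - t) / (1 - p)) * indicator (space M - A) \<omega>" for \<omega>
      have iA: "integrable M (indicator A :: 'a \<Rightarrow> real)"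
        using A emeasure_finite[of A] by (intro integrable_real_indicator) (auto simp: less_top[symmetric])
      have iC: "integrable M (indicator (space M - A) :: 'a \<Rightarrow> real)"
        using A emeasure_finite[of "space M - A"] by (intro integrable_real_indicator) (auto simp: less_top[symmetric])
      have i1: "integrable M (\<lambda>\<omega>. \<phi> (t / p) * indicator A \<omega>)" using iA by (rule integrable_mult_right)
      have i2: "integrable M (\<lambda>\<omega>. \<phi> ((1 - t) / (1 - p)) * indicator (space M - A) \<omega>)"
        using iC by (rule integrable_mult_right)
      have ih: "integrable M h" unfolding h_def using i1 i2 by (rule Bochner_Integration.integrable_add)
      have inth: "(\<integral>\<omega>. h \<omega> \<partial>M) = \<phi> (t / p) * p + \<phi> ((1 - t) / (1 - p)) * (1 - p)"
      proof -
        have "(\<integral>\<omega>. h \<omega> \<partial>M) = (\<integral>\<omega>. \<phi> (t / p) * indicator A \<omega> \<partial>M) + (\<integral>\<omega>. \<phi> ((1 - t) / (1 - p)) * indicator (space M - A) \<omega> \<partial>M)"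
          unfolding h_def by (rule Bochner_Integration.integral_add[OF i1 i2])
        also have "(\<integral>\<omega>. \<phi> (t / p) * indicator A \<omega> \<partial>M) = \<phi> (t / p) * p"
          using A by (simp add: p_def Int_absorb2 sets.sets_into_space)
        also have "(\<integral>\<omega>. \<phi> ((1 - t) / (1 - p)) * indicator (space M - A) \<omega> \<partial>M) = \<phi> ((1 - t) / (1 - p)) * (1 - p)"
        proof -
          have "measure M (space M - A) = 1 - p" using A by (simp add: p_def prob_compl)
          then show ?thesis by (simp add: Int_absorb2)
        qed
        finally show ?thesis .
      qed
      define Z where "Z \<omega> = enn2real (RN_deriv M Q \<omega>)" for \<omega>
      have Zm: "(\<lambda>\<omega>. \<phi> (Z \<omega>)) \<in> borel_measurable M"
        unfolding Z_def by (rule phi_meas[OF cv]) auto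
      have hZ: "AE \<omega> in M. h \<omega> = \<phi> (Z \<omega>)"
        using D3 AE_space
      proof eventually_elim
        case (elim \<omega>)
        have "Z \<omega> = f \<omega>" unfolding Z_def elim(1) using D4(2) by simp
        then show ?case using elim(2) by (cases "\<omega> \<in> A") (auto simp: h_def f_def p_def indicator_def)
      qed
      have iZ: "integrable M (\<lambda>\<omega>. \<phi> (Z \<omega>))" by (rule integrable_cong_AE_imp[OF ih Zm hZ])
      have "(\<integral>\<omega>. \<phi> (Z \<omega>) \<partial>M) = (\<integral>\<omega>. h \<omega> \<partial>M)"
        using hZ Zm borel_measurable_integrable[OF ih] by (intro integral_cong_AE) (auto elim: AE_mp)
      also have "\<dots> = Hf \<phi> p t" unfolding inth Hf_def by (simp add: mult.commute)
      finally have "(\<integral>\<omega>. \<phi> (Z \<omega>) \<partial>M) \<le> \<delta>" using tS by simp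
      then have "Q \<in> phi_ball M \<phi> \<delta>" using iZ D1 by (simp add: phi_ball_def Z_def)
      moreover have "c < measure Q A" using D2 t by simp
      ultimately show ?thesis by blast
    qed
  qed
qed

lemma assemble:
  fixes M :: "'a measure" and XX :: "('a \<Rightarrow> real) set" and n :: nat
    and L G :: "nat \<Rightarrow> real \<Rightarrow> real" and Qs :: "nat \<Rightarrow> 'a measure set"
  assumes P: "prob_space M" and al: "atomless M" and adm: "admissible_rvs M XX" and n: "n \<ge> 1"
    and LH: "\<forall>i\<in>{1..n}. L i \<in> H_I"
    and G: "\<forall>i\<in>{1..n}. G i 0 = 0 \<and> G i 1 = 1 \<and>
        (\<forall>x y. 0 \<le> x \<and> x \<le> y \<and> y \<le> 1 \<longrightarrow> G i x \<le> G i y) \<and>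
        (\<forall>x y. 0 \<le> x \<and> x < y \<and> y \<le> 1 \<and> G i x < 1 \<longrightarrow> G i x < G i y) \<and>
        (\<forall>l. 0 < l \<and> l < 1 \<longrightarrow> (\<exists>u. 0 < u \<and> u < 1 \<and> G i u = l))"
    and B: "\<forall>i\<in>{1..n}. (\<forall>Q\<in>Qs i. prob_space Q \<and> sets Q = sets M) \<and>
        (\<forall>Q\<in>Qs i. \<forall>A\<in>sets M. measure Q A \<le> G i (measure M A)) \<and>
        (\<forall>A\<in>sets M. \<forall>c. c < G i (measure M A) \<longrightarrow> (\<exists>Q\<in>Qs i. c < measure Q A))"
    and att: "attainable n (\<lambda>i y. inv01 (G i) (L i y))"
  shows "\<forall>X\<in>XX. infconv n (\<lambda>i Y. SUP Q\<in>Qs i. LVaR (L i) Q Y) M XX X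
           = LVaR (Lstar n (\<lambda>i y. inv01 (G i) (L i y))) M X"
proof
  fix X assume X: "X \<in> XX"
  have XXm: "XX \<subseteq> borel_measurable M" using adm by (simp add: admissible_rvs_def)
  have IL: "mono (\<lambda>y. inv01 (G i) (L i y)) \<and> (\<forall>y. 0 < inv01 (G i) (L i y) \<and> inv01 (G i) (L i y) < 1)"
    "\<forall>x p. 0 \<le> p \<and> p \<le> 1 \<longrightarrow> (G i p \<le> L i x \<longleftrightarrow> p \<le> inv01 (G i) (L i x))"
    if i: "i \<in> {1..n}" for i
  proof -
    have Gi: "G i 0 = 0" "G i 1 = 1"
      "\<And>x y. 0 \<le> x \<Longrightarrow> x \<le> y \<Longrightarrow> y \<le> 1 \<Longrightarrow> G i x \<le> G i y"
      "\<And>x y. 0 \<le> x \<Longrightarrow> x < y \<Longrightarrow> y \<le> 1 \<Longrightarrow> G i x < 1 \<Longrightarrow> G i x < G i y"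
      "\<And>l. 0 < l \<Longrightarrow> l < 1 \<Longrightarrow> \<exists>u. 0 < u \<and> u < 1 \<and> G i u = l"
      using G i by blast+
    have Li: "L i \<in> H_I" using LH i by blast
    note R = inv01_Lambda[OF Gi Li]
    show "mono (\<lambda>y. inv01 (G i) (L i y)) \<and> (\<forall>y. 0 < inv01 (G i) (L i y) \<and> inv01 (G i) (L i y) < 1)"
      by (rule R(1))
    show "\<forall>x p. 0 \<le> p \<and> p \<le> 1 \<longrightarrow> (G i p \<le> L i x \<longleftrightarrow> p \<le> inv01 (G i) (L i x))"
      by (rule R(2))
  qed
  have Lm: "\<forall>i\<in>{1..n}. mono ((\<lambda>i y. inv01 (G i) (L i y)) i) \<and>
      (\<forall>x. 0 < (\<lambda>i y. inv01 (G i) (L i y)) i x \<and> (\<lambda>i y. inv01 (G i) (L i y)) i x < 1)"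
    using IL(1) by simp
  have req: "\<forall>i\<in>{1..n}. \<forall>Y\<in>XX. (\<lambda>i Y. SUP Q\<in>Qs i. LVaR (L i) Q Y) i Y
      = LVaR ((\<lambda>i y. inv01 (G i) (L i y)) i) M Y"
  proof (intro ballI)
    fix i Y assume i: "i \<in> {1..n}" and Y: "Y \<in> XX"
    have Ym: "Y \<in> borel_measurable M" using Y XXm by auto
    have Li: "mono (L i)" "\<forall>x. 0 < L i x \<and> L i x < 1" using LH i by (auto simp: H_I_def)
    have Bi: "\<forall>Q\<in>Qs i. prob_space Q \<and> sets Q = sets M"
      "\<forall>Q\<in>Qs i. \<forall>A\<in>sets M. measure Q A \<le> G i (measure M A)"
      "\<forall>A\<in>sets M. \<forall>c. c < G i (measure M A) \<longrightarrow> (\<exists>Q\<in>Qs i. c < measure Q A)"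
      using B i by blast+
    have "(SUP Q\<in>Qs i. LVaR (L i) Q Y) = LVaR (\<lambda>y. inv01 (G i) (L i y)) M Y"
      by (rule sup_LVaR[OF P Ym Bi(1) Li(1) Li(2) conjunct1[OF IL(1)[OF i]] conjunct2[OF IL(1)[OF i]] Bi(2) Bi(3) IL(2)[OF i]])
    then show "(\<lambda>i Y. SUP Q\<in>Qs i. LVaR (L i) Q Y) i Y = LVaR ((\<lambda>i y. inv01 (G i) (L i y)) i) M Y"
      by simp
  qed
  show "infconv n (\<lambda>i Y. SUP Q\<in>Qs i. LVaR (L i) Q Y) M XX X
           = LVaR (Lstar n (\<lambda>i y. inv01 (G i) (L i y))) M X"
    by (rule infconv_core[OF P al adm n Lm att req X])
qed

theorem mainTheorem15:
  fixes M :: "'a measure" and XX :: "('a \<Rightarrow> real) set" and n :: nat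
    and L :: "nat \<Rightarrow> real \<Rightarrow> real"
    and \<phi> :: "nat \<Rightarrow> real \<Rightarrow> real" and \<delta> :: "nat \<Rightarrow> real"
    and k1 k2 :: "nat \<Rightarrow> real"
  assumes "prob_space M" and "atomless M"
    and "admissible_rvs M XX"
    and "n \<ge> 1"
    and "\<forall>i\<in>{1..n}. L i \<in> H_I"
  shows "((\<forall>i\<in>{1..n}. strictly_convex_nonneg (\<phi> i) \<and> \<phi> i 1 = 0 \<and>
             filterlim (\<lambda>x. \<phi> i x / x) at_top at_top \<and> \<delta> i > 0)
          \<and> attainable n (\<lambda>i y. inv01 (g_phi (\<phi> i) (\<delta> i)) (L i y))
          \<longrightarrow> (\<forall>X\<in>XX. infconv n (\<lambda>i Y. SUP Q\<in>phi_ball M (\<phi> i) (\<delta> i). LVaR (L i) Q Y) M XX X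
                 = LVaR (Lstar n (\<lambda>i y. inv01 (g_phi (\<phi> i) (\<delta> i)) (L i y))) M X))
       \<and> ((\<forall>i\<in>{1..n}. 0 \<le> k1 i \<and> k1 i < 1 \<and> 1 < k2 i)
          \<and> attainable n (\<lambda>i y. inv01 (g_band (k1 i) (k2 i)) (L i y))
          \<longrightarrow> (\<forall>X\<in>XX. infconv n (\<lambda>i Y. SUP Q\<in>ratio_band M (k1 i) (k2 i). LVaR (L i) Q Y) M XX X
                 = LVaR (Lstar n (\<lambda>i y. inv01 (g_band (k1 i) (k2 i)) (L i y))) M X))"
proof (intro conjI impI)
  note P = assms(1) and al = assms(2) and adm = assms(3) and n = assms(4) and LH = assms(5)
  assume H: "(\<forall>i\<in>{1..n}. strictly_convex_nonneg (\<phi> i) \<and> \<phi> i 1 = 0 \<and>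
             filterlim (\<lambda>x. \<phi> i x / x) at_top at_top \<and> \<delta> i > 0)
          \<and> attainable n (\<lambda>i y. inv01 (g_phi (\<phi> i) (\<delta> i)) (L i y))"
  have G: "\<forall>i\<in>{1..n}. (\<lambda>i. g_phi (\<phi> i) (\<delta> i)) i 0 = 0 \<and> (\<lambda>i. g_phi (\<phi> i) (\<delta> i)) i 1 = 1 \<and>
        (\<forall>x y. 0 \<le> x \<and> x \<le> y \<and> y \<le> 1 \<longrightarrow> (\<lambda>i. g_phi (\<phi> i) (\<delta> i)) i x \<le> (\<lambda>i. g_phi (\<phi> i) (\<delta> i)) i y) \<and>
        (\<forall>x y. 0 \<le> x \<and> x < y \<and> y \<le> 1 \<and> (\<lambda>i. g_phi (\<phi> i) (\<delta> i)) i x < 1 \<longrightarrow> (\<lambda>i. g_phi (\<phi> i) (\<delta> i)) i x < (\<lambda>i. g_phi (\<phi> i) (\<delta> i)) i y) \<and>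
        (\<forall>l. 0 < l \<and> l < 1 \<longrightarrow> (\<exists>u. 0 < u \<and> u < 1 \<and> (\<lambda>i. g_phi (\<phi> i) (\<delta> i)) i u = l))"
  proof
    fix i assume i: "i \<in> {1..n}"
    have cv: "convex_on {0..} (\<phi> i)" using H i sc_convex by blast
    have p1: "\<phi> i 1 = 0" and d: "\<delta> i > 0" and sl: "filterlim (\<lambda>x. \<phi> i x / x) at_top at_top"
      using H i by auto
    show "(\<lambda>i. g_phi (\<phi> i) (\<delta> i)) i 0 = 0 \<and> (\<lambda>i. g_phi (\<phi> i) (\<delta> i)) i 1 = 1 \<and>
        (\<forall>x y. 0 \<le> x \<and> x \<le> y \<and> y \<le> 1 \<longrightarrow> (\<lambda>i. g_phi (\<phi> i) (\<delta> i)) i x \<le> (\<lambda>i. g_phi (\<phi> i) (\<delta> i)) i y) \<and>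
        (\<forall>x y. 0 \<le> x \<and> x < y \<and> y \<le> 1 \<and> (\<lambda>i. g_phi (\<phi> i) (\<delta> i)) i x < 1 \<longrightarrow> (\<lambda>i. g_phi (\<phi> i) (\<delta> i)) i x < (\<lambda>i. g_phi (\<phi> i) (\<delta> i)) i y) \<and>
        (\<forall>l. 0 < l \<and> l < 1 \<longrightarrow> (\<exists>u. 0 < u \<and> u < 1 \<and> (\<lambda>i. g_phi (\<phi> i) (\<delta> i)) i u = l))"
      using g_mono[OF cv p1 d] g_strict[OF cv p1 d] g_surj[OF cv p1 d sl]
      by (simp add: g_phi_def[of _ _ 0] g_phi_def[of _ _ 1])
  qed
  have B: "\<forall>i\<in>{1..n}. (\<forall>Q\<in>(\<lambda>i. phi_ball M (\<phi> i) (\<delta> i)) i. prob_space Q \<and> sets Q = sets M) \<and>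
        (\<forall>Q\<in>(\<lambda>i. phi_ball M (\<phi> i) (\<delta> i)) i. \<forall>A\<in>sets M. measure Q A \<le> (\<lambda>i. g_phi (\<phi> i) (\<delta> i)) i (measure M A)) \<and>
        (\<forall>A\<in>sets M. \<forall>c. c < (\<lambda>i. g_phi (\<phi> i) (\<delta> i)) i (measure M A) \<longrightarrow> (\<exists>Q\<in>(\<lambda>i. phi_ball M (\<phi> i) (\<delta> i)) i. c < measure Q A))"
  proof
    fix i assume i: "i \<in> {1..n}"
    have cv: "convex_on {0..} (\<phi> i)" using H i sc_convex by blast
    have p1: "\<phi> i 1 = 0" and d: "\<delta> i > 0" using H i by auto
    show "(\<forall>Q\<in>(\<lambda>i. phi_ball M (\<phi> i) (\<delta> i)) i. prob_space Q \<and> sets Q = sets M) \<and>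
        (\<forall>Q\<in>(\<lambda>i. phi_ball M (\<phi> i) (\<delta> i)) i. \<forall>A\<in>sets M. measure Q A \<le> (\<lambda>i. g_phi (\<phi> i) (\<delta> i)) i (measure M A)) \<and>
        (\<forall>A\<in>sets M. \<forall>c. c < (\<lambda>i. g_phi (\<phi> i) (\<delta> i)) i (measure M A) \<longrightarrow> (\<exists>Q\<in>(\<lambda>i. phi_ball M (\<phi> i) (\<delta> i)) i. c < measure Q A))"
      using phi_bounds[OF P cv p1 d] by simp
  qed
  have att: "attainable n (\<lambda>i y. inv01 ((\<lambda>i. g_phi (\<phi> i) (\<delta> i)) i) (L i y))" using H by simp
  show "\<forall>X\<in>XX. infconv n (\<lambda>i Y. SUP Q\<in>phi_ball M (\<phi> i) (\<delta> i). LVaR (L i) Q Y) M XX X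
                 = LVaR (Lstar n (\<lambda>i y. inv01 (g_phi (\<phi> i) (\<delta> i)) (L i y))) M X"
    using assemble[OF P al adm n LH G B att] by simp
next
  note P = assms(1) and al = assms(2) and adm = assms(3) and n = assms(4) and LH = assms(5)
  assume H: "(\<forall>i\<in>{1..n}. 0 \<le> k1 i \<and> k1 i < 1 \<and> 1 < k2 i)
          \<and> attainable n (\<lambda>i y. inv01 (g_band (k1 i) (k2 i)) (L i y))"
  have G: "\<forall>i\<in>{1..n}. (\<lambda>i. g_band (k1 i) (k2 i)) i 0 = 0 \<and> (\<lambda>i. g_band (k1 i) (k2 i)) i 1 = 1 \<and>
        (\<forall>x y. 0 \<le> x \<and> x \<le> y \<and> y \<le> 1 \<longrightarrow> (\<lambda>i. g_band (k1 i) (k2 i)) i x \<le> (\<lambda>i. g_band (k1 i) (k2 i)) i y) \<and>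
        (\<forall>x y. 0 \<le> x \<and> x < y \<and> y \<le> 1 \<and> (\<lambda>i. g_band (k1 i) (k2 i)) i x < 1 \<longrightarrow> (\<lambda>i. g_band (k1 i) (k2 i)) i x < (\<lambda>i. g_band (k1 i) (k2 i)) i y) \<and>
        (\<forall>l. 0 < l \<and> l < 1 \<longrightarrow> (\<exists>u. 0 < u \<and> u < 1 \<and> (\<lambda>i. g_band (k1 i) (k2 i)) i u = l))"
  proof
    fix i assume i: "i \<in> {1..n}"
    have k: "0 \<le> k1 i" "k1 i < 1" "1 < k2 i" using H i by auto
    note bg = band_g[OF k]
    show "(\<lambda>i. g_band (k1 i) (k2 i)) i 0 = 0 \<and> (\<lambda>i. g_band (k1 i) (k2 i)) i 1 = 1 \<and>
        (\<forall>x y. 0 \<le> x \<and> x \<le> y \<and> y \<le> 1 \<longrightarrow> (\<lambda>i. g_band (k1 i) (k2 i)) i x \<le> (\<lambda>i. g_band (k1 i) (k2 i)) i y) \<and>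
        (\<forall>x y. 0 \<le> x \<and> x < y \<and> y \<le> 1 \<and> (\<lambda>i. g_band (k1 i) (k2 i)) i x < 1 \<longrightarrow> (\<lambda>i. g_band (k1 i) (k2 i)) i x < (\<lambda>i. g_band (k1 i) (k2 i)) i y) \<and>
        (\<forall>l. 0 < l \<and> l < 1 \<longrightarrow> (\<exists>u. 0 < u \<and> u < 1 \<and> (\<lambda>i. g_band (k1 i) (k2 i)) i u = l))"
      using bg by blast
  qed
  have B: "\<forall>i\<in>{1..n}. (\<forall>Q\<in>(\<lambda>i. ratio_band M (k1 i) (k2 i)) i. prob_space Q \<and> sets Q = sets M) \<and>
        (\<forall>Q\<in>(\<lambda>i. ratio_band M (k1 i) (k2 i)) i. \<forall>A\<in>sets M. measure Q A \<le> (\<lambda>i. g_band (k1 i) (k2 i)) i (measure M A)) \<and>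
        (\<forall>A\<in>sets M. \<forall>c. c < (\<lambda>i. g_band (k1 i) (k2 i)) i (measure M A) \<longrightarrow> (\<exists>Q\<in>(\<lambda>i. ratio_band M (k1 i) (k2 i)) i. c < measure Q A))"
  proof
    fix i assume i: "i \<in> {1..n}"
    have k: "0 \<le> k1 i" "k1 i < 1" "1 < k2 i" using H i by auto
    show "(\<forall>Q\<in>(\<lambda>i. ratio_band M (k1 i) (k2 i)) i. prob_space Q \<and> sets Q = sets M) \<and>
        (\<forall>Q\<in>(\<lambda>i. ratio_band M (k1 i) (k2 i)) i. \<forall>A\<in>sets M. measure Q A \<le> (\<lambda>i. g_band (k1 i) (k2 i)) i (measure M A)) \<and>
        (\<forall>A\<in>sets M. \<forall>c. c < (\<lambda>i. g_band (k1 i) (k2 i)) i (measure M A) \<longrightarrow> (\<exists>Q\<in>(\<lambda>i. ratio_band M (k1 i) (k2 i)) i. c < measure Q A))"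
      using band_bounds[OF P k] by simp
  qed
  have att: "attainable n (\<lambda>i y. inv01 ((\<lambda>i. g_band (k1 i) (k2 i)) i) (L i y))" using H by simp
  show "\<forall>X\<in>XX. infconv n (\<lambda>i Y. SUP Q\<in>ratio_band M (k1 i) (k2 i). LVaR (L i) Q Y) M XX X
                 = LVaR (Lstar n (\<lambda>i y. inv01 (g_band (k1 i) (k2 i)) (L i y))) M X"
    using assemble[OF P al adm n LH G B att] by simp
qed

end
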